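(* $W^+$ is a normal subgroup of $G$, and the cosets of $W^+$ in $G$ are $W^+$, $\tau_xW^+$, $\tau_yW^+$, $\tau_zW^+$, $\varrho W^+$, $\varrho^2W^+$. The quotient $G/W^+$ is isomorphic to the symmetric group $S_3$.
   Context: $\mathbb F$ is a field of characteristic zero, $\mathfrak{sl}_2$ the Lie algebra of $2\times2$ trace-zero matrices over $\mathbb F$ with trace form $(u,v)=\mathrm{tr}(uv)$. Equitable basis: $x=\begin{pmatrix}1&0\\0&-1\end{pmatrix}$, $y=\begin{pmatrix}-1&2\\0&1\end{pmatrix}$, $z=\begin{pmatrix}-1&0\\-2&1\end{pmatrix}$. Let $x^*=\begin{pmatrix}1&-1\\1&-1\end{pmatrix}$, $y^*=\begin{pmatrix}0&0\\1&0\end{pmatrix}$, $z^*=\begin{pmatrix}0&-1\\0&0\end{pmatrix}$, and $\sigma_x=\exp(\mathrm{ad}\,x^* )$, $\sigma_y=\exp(\mathrm{ad}\,y^* )$, $\sigma_z=\exp(\mathrm{ad}\,z^* )$. $G=\langle\sigma_x,\sigma_y,\sigma_z\rangle\subseteq\mathrm{Aut}_{\mathbb F}(\mathfrak{sl}_2)$. $\varrho$ is the automorphism of $\mathfrak{sl}_2$ with $\varrho(x)=y,\varrho(y)=z,\varrho(z)=x$ (it equals $\sigma_x\sigma_y$). $\tau_x=\sigma_y\sigma_z\sigma_y$, $\tau_y=\sigma_z\sigma_x\sigma_z$, $\tau_z=\sigma_x\sigma_y\sigma_x$. For $u\in\{x,y,z\}$, $r_u(v)=v-(u,v)u$; $W=\langle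 r_x,r_y,r_z\rangle$, and $W^+$ is the subgroup of elements of $W$ of even length with respect to the generators $r_x,r_y,r_z$. *)

theory Defs
  imports "HOL-Analysis.Analysis" "HOL-Algebra.Bij" "HOL-Algebra.Sym_Groups"
    "HOL-Algebra.Generated_Groups" "HOL-Algebra.Coset"
begin

definition mat2 :: "'a::field_char_0 \<Rightarrow> 'a \<Rightarrow> 'a \<Rightarrow> 'a \<Rightarrow> 'a^2^2" where
  "mat2 a b c d = (\<chi> i j. if i = 1 then (if j = 1 then a else b) else (if j = 1 then c else d))"

definition smat :: "'a::field_char_0 \<Rightarrow> 'a^2^2 \<Rightarrow> 'a^2^2" where
  "smat c A = (\<chi> i j. c * A$i$j)"

definition sl2 :: "(('a::field_char_0)^2^2) set" where
  "sl2 = {A. trace A = 0}"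

definition lie_br :: "'a::field_char_0^2^2 \<Rightarrow> 'a^2^2 \<Rightarrow> 'a^2^2" where
  "lie_br u v = u ** v - v ** u"

definition ad :: "'a::field_char_0^2^2 \<Rightarrow> 'a^2^2 \<Rightarrow> 'a^2^2" where
  "ad a = (\<lambda>v. lie_br a v)"

definition tform :: "'a::field_char_0^2^2 \<Rightarrow> 'a^2^2 \<Rightarrow> 'a" where
  "tform u v = trace (u ** v)"

definition nil_index :: "('a::field_char_0^2^2 \<Rightarrow> 'a^2^2) \<Rightarrow> nat" where
  "nil_index f = (LEAST n. \<forall>v\<in>sl2. (f ^^ n) v = 0)"

definition exp_nil :: "('a::field_char_0^2^2 \<Rightarrow> 'a^2^2) \<Rightarrow> ('a^2^2 \<Rightarrow> 'a^2^2)" where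
  "exp_nil f = (\<lambda>v\<in>sl2. \<Sum>k<nil_index f. smat (inverse (fact k)) ((f ^^ k) v))"

abbreviation Bsl2 :: "(('a::field_char_0)^2^2 \<Rightarrow> 'a^2^2) monoid" where
  "Bsl2 \<equiv> BijGroup sl2"

definition ex :: "'a::field_char_0^2^2" where "ex = mat2 1 0 0 (-1)"
definition ey :: "'a::field_char_0^2^2" where "ey = mat2 (-1) 2 0 1"
definition ez :: "'a::field_char_0^2^2" where "ez = mat2 (-1) 0 (-2) 1"

definition xs :: "'a::field_char_0^2^2" where "xs = mat2 1 (-1) 1 (-1)"
definition ys :: "'a::field_char_0^2^2" where "ys = mat2 0 0 1 0"
definition zs :: "'a::field_char_0^2^2" where "zs = mat2 0 (-1) 0 0"

definition sigma_x :: "'a::field_char_0^2^2 \<Rightarrow> 'a^2^2" where "sigma_x = exp_nil (ad xs)"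
definition sigma_y :: "'a::field_char_0^2^2 \<Rightarrow> 'a^2^2" where "sigma_y = exp_nil (ad ys)"
definition sigma_z :: "'a::field_char_0^2^2 \<Rightarrow> 'a^2^2" where "sigma_z = exp_nil (ad zs)"

definition Ggrp :: "(('a::field_char_0)^2^2 \<Rightarrow> 'a^2^2) monoid" where
  "Ggrp = subgroup_generated Bsl2 {sigma_x, sigma_y, sigma_z}"

definition rho :: "'a::field_char_0^2^2 \<Rightarrow> 'a^2^2" where
  "rho = (THE f. f \<in> extensional sl2
      \<and> (\<forall>u\<in>sl2. \<forall>v\<in>sl2. f (u + v) = f u + f v)
      \<and> (\<forall>c. \<forall>u\<in>sl2. f (smat c u) = smat c (f u))
      \<and> f ex = ey \<and> f ey = ez \<and> f ez = ex)"

definition tau_x :: "'a::field_char_0^2^2 \<Rightarrow> 'a^2^2" where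
  "tau_x = sigma_y \<otimes>\<^bsub>Bsl2\<^esub> sigma_z \<otimes>\<^bsub>Bsl2\<^esub> sigma_y"
definition tau_y :: "'a::field_char_0^2^2 \<Rightarrow> 'a^2^2" where
  "tau_y = sigma_z \<otimes>\<^bsub>Bsl2\<^esub> sigma_x \<otimes>\<^bsub>Bsl2\<^esub> sigma_z"
definition tau_z :: "'a::field_char_0^2^2 \<Rightarrow> 'a^2^2" where
  "tau_z = sigma_x \<otimes>\<^bsub>Bsl2\<^esub> sigma_y \<otimes>\<^bsub>Bsl2\<^esub> sigma_x"

definition refl :: "'a::field_char_0^2^2 \<Rightarrow> 'a^2^2 \<Rightarrow> 'a^2^2" where
  "refl u = (\<lambda>v\<in>sl2. v - smat (tform u v) u)"

definition Wgens :: "(('a::field_char_0)^2^2 \<Rightarrow> 'a^2^2) set" where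
  "Wgens = {refl ex, refl ey, refl ez}"

definition Wset :: "(('a::field_char_0)^2^2 \<Rightarrow> 'a^2^2) set" where
  "Wset = generate Bsl2 Wgens"

definition wprod :: "('a::field_char_0^2^2 \<Rightarrow> 'a^2^2) list \<Rightarrow> ('a^2^2 \<Rightarrow> 'a^2^2)" where
  "wprod ws = foldr (\<lambda>g acc. g \<otimes>\<^bsub>Bsl2\<^esub> acc) ws \<one>\<^bsub>Bsl2\<^esub>"

definition wlen :: "('a::field_char_0^2^2 \<Rightarrow> 'a^2^2) \<Rightarrow> nat" where
  "wlen w = (LEAST n. \<exists>ws. set ws \<subseteq> Wgens \<and> length ws = n \<and> wprod ws = w)"

definition Wplus :: "(('a::field_char_0)^2^2 \<Rightarrow> 'a^2^2) set" where
  "Wplus = {w \<in> Wset. even (wlen w)}"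

end

theory Submission
  imports Defs
begin

lemma two_ne_one_2: "(1::2) \<noteq> 2" by simp

lemma mat2_nth [simp]: "mat2 a b c d $ 1 $ 1 = a" "mat2 a b c d $ 1 $ 2 = b"
  "mat2 a b c d $ 2 $ 1 = c" "mat2 a b c d $ 2 $ 2 = d"
  by (simp_all add: mat2_def)

lemma mat2_eta: "(A::'a::field_char_0^2^2) = mat2 (A$1$1) (A$1$2) (A$2$1) (A$2$2)"
  by (simp add: vec_eq_iff forall_2)

lemma mat2_eq_iff [simp]: "mat2 a b c d = mat2 a' b' c' d' \<longleftrightarrow> a = a' \<and> b = b' \<and> c = c' \<and> d = d'"
  by (simp add: vec_eq_iff forall_2 mat2_def)

lemma mat2_mult [simp]: "mat2 a b c d ** mat2 e f g h = mat2 (a*e+b*g) (a*f+b*h) (c*e+d*g) (c*f+d*h)"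
  by (simp add: matrix_matrix_mult_def vec_eq_iff forall_2 sum_2)

lemma mat2_add [simp]: "mat2 a b c d + mat2 e f g h = mat2 (a+e) (b+f) (c+g) (d+h)"
  by (simp add: vec_eq_iff forall_2)

lemma mat2_diff [simp]: "mat2 a b c d - mat2 e f g h = mat2 (a-e) (b-f) (c-g) (d-h)"
  by (simp add: vec_eq_iff forall_2)

lemma mat2_smat [simp]: "smat k (mat2 a b c d) = mat2 (k*a) (k*b) (k*c) (k*d)"
  by (simp add: vec_eq_iff forall_2 smat_def)

lemma mat2_zero: "(0::'a::field_char_0^2^2) = mat2 0 0 0 0"
  by (simp add: vec_eq_iff forall_2)

lemma mat2_trace [simp]: "trace (mat2 a b c d) = a + d"
  by (simp add: trace_def sum_2)

lemma sl2_iff: "v \<in> sl2 \<longleftrightarrow> v $ 2 $ 2 = - v $ 1 $ 1"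
  using mat2_trace[of "v$1$1" "v$1$2" "v$2$1" "v$2$2"]
  by (auto simp: sl2_def mat2_eta[symmetric] add_eq_0_iff)

lemma sl2_mat2 [simp]: "mat2 a b c d \<in> sl2 \<longleftrightarrow> d = - a"
  by (simp add: sl2_iff)

lemma sl2_cases: assumes "v \<in> sl2" obtains a b c where "v = mat2 a b c (-a)"
  using assms mat2_eta[of v] sl2_iff by metis


datatype m3 = M3 int int int int int int int int int

fun mmul :: "m3 \<Rightarrow> m3 \<Rightarrow> m3" where
  "mmul (M3 a b c d e f g h i) (M3 a' b' c' d' e' f' g' h' i') =
    M3 (a*a'+b*d'+c*g') (a*b'+b*e'+c*h') (a*c'+b*f'+c*i')
       (d*a'+e*d'+f*g') (d*b'+e*e'+f*h') (d*c'+e*f'+f*i')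
       (g*a'+h*d'+i*g') (g*b'+h*e'+i*h') (g*c'+h*f'+i*i')"

definition mid :: m3 where "mid = M3 1 0 0 0 1 0 0 0 1"

fun det3 :: "m3 \<Rightarrow> int" where
  "det3 (M3 a b c d e f g h i) = a*(e*i - f*h) - b*(d*i - f*g) + c*(d*h - e*g)"

fun adj3 :: "m3 \<Rightarrow> m3" where
  "adj3 (M3 a b c d e f g h i) =
     M3 (e*i - f*h) (c*h - b*i) (b*f - c*e)
        (f*g - d*i) (a*i - c*g) (c*d - a*f)
        (d*h - e*g) (b*g - a*h) (a*e - b*d)"

fun smul3 :: "int \<Rightarrow> m3 \<Rightarrow> m3" where
  "smul3 k (M3 a b c d e f g h i) = M3 (k*a) (k*b) (k*c) (k*d) (k*e) (k*f) (k*g) (k*h) (k*i)"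

definition minv :: "m3 \<Rightarrow> m3" where "minv A = smul3 (det3 A) (adj3 A)"

lemma mmul_adj: "mmul A (adj3 A) = smul3 (det3 A) mid"
  by (cases A) (simp add: mid_def algebra_simps)
lemma mmul_adj': "mmul (adj3 A) A = smul3 (det3 A) mid"
  by (cases A) (simp add: mid_def algebra_simps)
lemma mmul_smul: "mmul A (smul3 k B) = smul3 k (mmul A B)"
  by (cases A; cases B) (simp add: algebra_simps)
lemma mmul_smul': "mmul (smul3 k A) B = smul3 k (mmul A B)"
  by (cases A; cases B) (simp add: algebra_simps)
lemma smul_smul: "smul3 k (smul3 l A) = smul3 (k*l) A"
  by (cases A) (simp add: algebra_simps)
lemma smul_one: "smul3 1 A = A"
  by (cases A) simp

lemma minv_ok:
  assumes "det3 A = 1 \<or> det3 A = -1"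
  shows "mmul A (minv A) = mid" "mmul (minv A) A = mid"
proof -
  have "det3 A * det3 A = 1" using assms by auto
  then show "mmul A (minv A) = mid" "mmul (minv A) A = mid"
    by (simp_all add: minv_def mmul_smul mmul_smul' mmul_adj mmul_adj' smul_smul smul_one)
qed

definition cx :: "'a::field_char_0^2^2 \<Rightarrow> 'a" where "cx v = v$1$1 + v$1$2/2 - v$2$1/2"
definition cy :: "'a::field_char_0^2^2 \<Rightarrow> 'a" where "cy v = v$1$2/2"
definition cz :: "'a::field_char_0^2^2 \<Rightarrow> 'a" where "cz v = - v$2$1/2"
definition emb :: "'a::field_char_0 \<Rightarrow> 'a \<Rightarrow> 'a \<Rightarrow> 'a^2^2" where
  "emb p q r = mat2 (p-q-r) (2*q) (-2*r) (q+r-p)"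

lemma emb_sl2 [simp]: "emb p q r \<in> sl2"
  by (simp add: emb_def)
lemma c_emb [simp]: "cx (emb p q r) = p" "cy (emb p q r) = q" "cz (emb p q r) = r"
  by (simp_all add: emb_def cx_def cy_def cz_def)
lemma emb_c: "v \<in> sl2 \<Longrightarrow> emb (cx v) (cy v) (cz v) = v"
  by (erule sl2_cases) (simp add: emb_def cx_def cy_def cz_def field_simps)

fun act :: "m3 \<Rightarrow> 'a::field_char_0^2^2 \<Rightarrow> 'a^2^2" where
  "act (M3 a b c d e f g h i) = (\<lambda>v\<in>sl2.
     emb (of_int a * cx v + of_int b * cy v + of_int c * cz v)
         (of_int d * cx v + of_int e * cy v + of_int f * cz v)
         (of_int g * cx v + of_int h * cy v + of_int i * cz v))"

lemma act_sl2: "v \<in> sl2 \<Longrightarrow> act A v \<in> sl2"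
  by (cases A) simp

lemma act_out: "v \<notin> sl2 \<Longrightarrow> act A v = undefined"
  by (cases A) simp

lemma act_ext: "act A \<in> extensional sl2"
  by (cases A) simp

lemma act_act: "v \<in> sl2 \<Longrightarrow> act A (act B v) = act (mmul A B) v"
  by (cases A; cases B) (simp add: algebra_simps)

lemma act_mid: "act mid = (\<lambda>v\<in>sl2. v)"
  by (rule ext) (simp add: mid_def emb_c)

lemma compose_act: "compose sl2 (act A) (act B) = act (mmul A B)"
  by (rule ext) (simp add: compose_def act_act act_out)

lemma act_Bij_inv: assumes "mmul A B = mid" "mmul B A = mid"
  shows "act A \<in> Bij sl2"
proof -
  have "bij_betw (act A) sl2 sl2"
    apply (rule bij_betwI[where g="act B"])
    using assms by (auto simp: act_sl2 act_act act_mid)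
  then show ?thesis by (simp add: Bij_def act_ext)
qed

lemma act_Bij: assumes "det3 A = 1 \<or> det3 A = -1"
  shows "act A \<in> Bij sl2"
  using act_Bij_inv minv_ok[OF assms] by blast

lemma act_carrier [simp]: "det3 A = 1 \<or> det3 A = -1 \<Longrightarrow> act A \<in> carrier Bsl2"
  by (simp add: BijGroup_def act_Bij)

lemma act_mult [simp]: "det3 A = 1 \<or> det3 A = -1 \<Longrightarrow> det3 B = 1 \<or> det3 B = -1
  \<Longrightarrow> act A \<otimes>\<^bsub>Bsl2\<^esub> act B = act (mmul A B)"
  by (simp add: BijGroup_def act_Bij compose_act)

lemma one_Bsl2: "\<one>\<^bsub>Bsl2\<^esub> = act mid"
  by (simp add: BijGroup_def act_mid)

lemma act_inv: assumes d: "det3 A = 1 \<or> det3 A = -1"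
  shows "inv\<^bsub>Bsl2\<^esub> (act A :: 'a::field_char_0^2^2 \<Rightarrow> _) = act (minv A)"
proof -
  have c1: "(act (minv A) :: 'a^2^2 \<Rightarrow> _) \<in> Bij sl2"
    using act_Bij_inv[of "minv A" A] minv_ok[OF d] by simp
  have c2: "(act A :: 'a^2^2 \<Rightarrow> _) \<in> Bij sl2" using act_Bij[OF d] .
  have "(act (minv A) :: 'a^2^2 \<Rightarrow> _) \<otimes>\<^bsub>Bsl2\<^esub> act A = act mid"
    using c1 c2 minv_ok[OF d] by (simp add: BijGroup_def compose_act)
  then show ?thesis
    apply -
    apply (rule group.inv_equality[OF group_BijGroup])
    using c1 c2 by (simp_all add: one_Bsl2 BijGroup_def act_mid)
qed

lemma c_ex [simp]: "cx (ex::'a::field_char_0^2^2) = 1" "cy (ex::'a::field_char_0^2^2) = 0" "cz (ex::'a::field_char_0^2^2) = 0"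
  by (simp_all add: ex_def cx_def cy_def cz_def)
lemma c_ey [simp]: "cx (ey::'a::field_char_0^2^2) = 0" "cy (ey::'a::field_char_0^2^2) = 1" "cz (ey::'a::field_char_0^2^2) = 0"
  by (simp_all add: ey_def cx_def cy_def cz_def)
lemma c_ez [simp]: "cx (ez::'a::field_char_0^2^2) = 0" "cy (ez::'a::field_char_0^2^2) = 0" "cz (ez::'a::field_char_0^2^2) = 1"
  by (simp_all add: ez_def cx_def cy_def cz_def)
lemma e_sl2 [simp]: "(ex::'a::field_char_0^2^2) \<in> sl2" "(ey::'a::field_char_0^2^2) \<in> sl2" "(ez::'a::field_char_0^2^2) \<in> sl2"
  by (simp_all add: ex_def ey_def ez_def)

lemma act_inj: "act A = (act B :: 'a::field_char_0^2^2 \<Rightarrow> _) \<Longrightarrow> A = B"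
proof -
  assume h: "act A = (act B :: 'a::field_char_0^2^2 \<Rightarrow> _)"
  have "cx (act A (ex::'a^2^2)) = cx (act B (ex::'a^2^2))" "cy (act A (ex::'a^2^2)) = cy (act B (ex::'a^2^2))"
       "cz (act A (ex::'a^2^2)) = cz (act B (ex::'a^2^2))"
       "cx (act A (ey::'a^2^2)) = cx (act B (ey::'a^2^2))" "cy (act A (ey::'a^2^2)) = cy (act B (ey::'a^2^2))"
       "cz (act A (ey::'a^2^2)) = cz (act B (ey::'a^2^2))"
       "cx (act A (ez::'a^2^2)) = cx (act B (ez::'a^2^2))" "cy (act A (ez::'a^2^2)) = cy (act B (ez::'a^2^2))"
       "cz (act A (ez::'a^2^2)) = cz (act B (ez::'a^2^2))" using h by simp_all
  then show "A = B"
    by (cases A; cases B) simp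
qed


lemma nil_index_3:
  assumes "\<forall>v\<in>sl2. (f ^^ 3) v = 0" "w \<in> sl2" "(f ^^ 2) w \<noteq> 0" "f 0 = 0"
  shows "nil_index f = 3"
  unfolding nil_index_def
proof (rule Least_equality)
  show "\<forall>v\<in>sl2. (f ^^ 3) v = 0" by fact
next
  fix m assume h: "\<forall>v\<in>sl2. (f ^^ m) v = 0"
  show "3 \<le> m"
  proof (rule ccontr)
    assume "\<not> 3 \<le> m"
    then have "m = 0 \<or> m = 1 \<or> m = 2" by auto
    then show False
      using h assms(2,3,4) by (auto simp: numeral_2_eq_2)
  qed
qed

lemma sl2_add: "u \<in> sl2 \<Longrightarrow> v \<in> sl2 \<Longrightarrow> u + v \<in> sl2"
  by (auto elim!: sl2_cases)
lemma sl2_smat: "u \<in> sl2 \<Longrightarrow> smat c u \<in> sl2"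
  by (auto elim!: sl2_cases)

lemma sigma_x_eq: "sigma_x = act (M3 1 0 0 2 2 (-1) 0 1 0)"
proof -
  have n: "nil_index (ad (xs::'a::field_char_0^2^2)) = 3"
    apply (rule nil_index_3[where w="mat2 1 0 0 (-1)"])
    by (auto simp: ad_def lie_br_def xs_def numeral_3_eq_3 numeral_2_eq_2 mat2_zero elim!: sl2_cases)
  show ?thesis
    unfolding sigma_x_def exp_nil_def n
  proof (rule ext)
    fix v :: "'a^2^2"
    show "(\<lambda>v\<in>sl2. \<Sum>k<3. smat (inverse (fact k)) ((ad xs ^^ k) v)) v = act (M3 1 0 0 2 2 (-1) 0 1 0) v"
      by (cases "v \<in> sl2") (auto simp: ad_def lie_br_def xs_def numeral_3_eq_3 emb_def cx_def cy_def cz_def field_simps elim!: sl2_cases)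
  qed
qed

lemma sigma_y_eq: "sigma_y = act (M3 0 0 1 0 1 0 (-1) 2 2)"
proof -
  have n: "nil_index (ad (ys::'a::field_char_0^2^2)) = 3"
    apply (rule nil_index_3[where w="mat2 0 1 0 0"])
    by (auto simp: ad_def lie_br_def ys_def numeral_3_eq_3 numeral_2_eq_2 mat2_zero elim!: sl2_cases)
  show ?thesis
    unfolding sigma_y_def exp_nil_def n
  proof (rule ext)
    fix v :: "'a^2^2"
    show "(\<lambda>v\<in>sl2. \<Sum>k<3. smat (inverse (fact k)) ((ad ys ^^ k) v)) v = act (M3 0 0 1 0 1 0 (-1) 2 2) v"
      by (cases "v \<in> sl2") (auto simp: ad_def lie_br_def ys_def numeral_3_eq_3 emb_def cx_def cy_def cz_def field_simps elim!: sl2_cases)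
  qed
qed

lemma sigma_z_eq: "sigma_z = act (M3 2 (-1) 2 1 0 0 0 0 1)"
proof -
  have n: "nil_index (ad (zs::'a::field_char_0^2^2)) = 3"
    apply (rule nil_index_3[where w="mat2 0 0 1 0"])
    by (auto simp: ad_def lie_br_def zs_def numeral_3_eq_3 numeral_2_eq_2 mat2_zero elim!: sl2_cases)
  show ?thesis
    unfolding sigma_z_def exp_nil_def n
  proof (rule ext)
    fix v :: "'a^2^2"
    show "(\<lambda>v\<in>sl2. \<Sum>k<3. smat (inverse (fact k)) ((ad zs ^^ k) v)) v = act (M3 2 (-1) 2 1 0 0 0 0 1) v"
      by (cases "v \<in> sl2") (auto simp: ad_def lie_br_def zs_def numeral_3_eq_3 emb_def cx_def cy_def cz_def field_simps elim!: sl2_cases)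
  qed
qed

lemma refl_x_eq: "refl ex = act (M3 (-1) 2 2 0 1 0 0 0 1)"
  by (rule ext, case_tac "x \<in> sl2") (auto simp: refl_def tform_def ex_def emb_def cx_def cy_def cz_def field_simps elim!: sl2_cases)
lemma refl_y_eq: "refl ey = act (M3 1 0 0 2 (-1) 2 0 0 1)"
  by (rule ext, case_tac "x \<in> sl2") (auto simp: refl_def tform_def ey_def emb_def cx_def cy_def cz_def field_simps elim!: sl2_cases)
lemma refl_z_eq: "refl ez = act (M3 1 0 0 0 1 0 2 2 (-1))"
  by (rule ext, case_tac "x \<in> sl2") (auto simp: refl_def tform_def ez_def emb_def cx_def cy_def cz_def field_simps elim!: sl2_cases)

lemma act_add: "u \<in> sl2 \<Longrightarrow> v \<in> sl2 \<Longrightarrow> act A (u + v) = act A u + act A v"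
  by (cases A) (auto simp: sl2_add emb_def cx_def cy_def cz_def field_simps elim!: sl2_cases)
lemma act_smat: "u \<in> sl2 \<Longrightarrow> act A (smat c u) = smat c (act A u)"
  by (cases A) (auto simp: sl2_smat emb_def cx_def cy_def cz_def field_simps elim!: sl2_cases)

lemma decomp: "v \<in> sl2 \<Longrightarrow> v = smat (cx v) ex + smat (cy v) ey + smat (cz v) ez"
  by (auto simp: ex_def ey_def ez_def cx_def cy_def cz_def field_simps elim!: sl2_cases)

lemma act_e: "act (M3 a b c d e f g h i) (ex::'a::field_char_0^2^2) = emb (of_int a) (of_int d) (of_int g)"
  "act (M3 a b c d e f g h i) (ey::'a::field_char_0^2^2) = emb (of_int b) (of_int e) (of_int h)"
  "act (M3 a b c d e f g h i) (ez::'a::field_char_0^2^2) = emb (of_int c) (of_int f) (of_int i)"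
  by simp_all

lemma rho_eq: "rho = act (M3 0 0 1 1 0 0 0 1 0)"
  unfolding rho_def
proof (rule the_equality)
  let ?R = "act (M3 0 0 1 1 0 0 0 1 0) :: 'a::field_char_0^2^2 \<Rightarrow> _"
  show "?R \<in> extensional sl2 \<and> (\<forall>u\<in>sl2. \<forall>v\<in>sl2. ?R (u + v) = ?R u + ?R v) \<and>
    (\<forall>c. \<forall>u\<in>sl2. ?R (smat c u) = smat c (?R u)) \<and> ?R ex = ey \<and> ?R ey = ez \<and> ?R ez = ex"
    apply (simp add: act_ext act_add act_smat act_e del: act.simps)
    by (simp add: emb_def ex_def ey_def ez_def)
next
  fix f :: "'a::field_char_0^2^2 \<Rightarrow> _"
  assume f: "f \<in> extensional sl2 \<and> (\<forall>u\<in>sl2. \<forall>v\<in>sl2. f (u + v) = f u + f v) \<and>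
    (\<forall>c. \<forall>u\<in>sl2. f (smat c u) = smat c (f u)) \<and> f ex = ey \<and> f ey = ez \<and> f ez = ex"
  show "f = act (M3 0 0 1 1 0 0 0 1 0)"
  proof (rule ext)
    fix v :: "'a^2^2"
    show "f v = act (M3 0 0 1 1 0 0 0 1 0) v"
    proof (cases "v \<in> sl2")
      case False
      then show ?thesis using f by (simp add: extensional_def)
    next
      case True
      have "f v = f (smat (cx v) ex + smat (cy v) ey + smat (cz v) ez)"
        using decomp[OF True] by simp
      also have "\<dots> = smat (cx v) ey + smat (cy v) ez + smat (cz v) ex"
        using f by (simp add: sl2_add sl2_smat)
      finally show ?thesis using True
        by (auto simp: ex_def ey_def ez_def emb_def cx_def cy_def cz_def field_simps elim!: sl2_cases)
    qed
  qed
qed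


declare act.simps [simp del]

definition "SXm = M3 1 0 0 2 2 (-1) 0 1 0"
definition "SYm = M3 0 0 1 0 1 0 (-1) 2 2"
definition "SZm = M3 2 (-1) 2 1 0 0 0 0 1"
definition "RXm = M3 (-1) 2 2 0 1 0 0 0 1"
definition "RYm = M3 1 0 0 2 (-1) 2 0 0 1"
definition "RZm = M3 1 0 0 0 1 0 2 2 (-1)"
definition "TXm = M3 (-1) 2 2 0 0 1 0 1 0"
definition "TYm = M3 0 0 1 2 (-1) 2 1 0 0"
definition "TZm = M3 0 1 0 1 0 0 2 2 (-1)"
definition "RHOm = M3 0 0 1 1 0 0 0 1 0"
definition "RHO2m = M3 0 1 0 0 0 1 1 0 0"

lemmas mdefs = SXm_def SYm_def SZm_def RXm_def RYm_def RZm_def TXm_def TYm_def TZm_def RHOm_def RHO2m_def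

lemma sig_eqs: "sigma_x = act SXm" "sigma_y = act SYm" "sigma_z = act SZm"
  by (simp_all add: sigma_x_eq sigma_y_eq sigma_z_eq mdefs)
lemma refl_eqs: "refl ex = act RXm" "refl ey = act RYm" "refl ez = act RZm"
  by (simp_all add: refl_x_eq refl_y_eq refl_z_eq mdefs)

lemma tau_eqs: "tau_x = act TXm" "tau_y = act TYm" "tau_z = act TZm"
  by (simp_all add: tau_x_def tau_y_def tau_z_def sig_eqs mdefs)

lemma rho_eq': "rho = act RHOm"
  by (simp add: rho_eq mdefs)

lemma Ggrp_mult: "mult Ggrp = mult Bsl2"
  by (simp add: Ggrp_def)

lemma Ggrp_one: "one Ggrp = one Bsl2"
  by (simp add: Ggrp_def)

lemma rho2_eq: "rho \<otimes>\<^bsub>Ggrp\<^esub> rho = act RHO2m"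
  by (simp add: Ggrp_mult rho_eq' mdefs)

lemma Ggrp_carrier: "carrier Ggrp = generate Bsl2 {sigma_x, sigma_y, sigma_z}"
proof -
  have "{sigma_x, sigma_y, sigma_z} \<subseteq> carrier (Bsl2 :: ('a::field_char_0^2^2 \<Rightarrow> _) monoid)"
    by (simp add: sig_eqs mdefs)
  then show ?thesis
    by (simp add: Ggrp_def carrier_subgroup_generated Int_absorb1)
qed

lemma group_Ggrp: "group Ggrp"
  unfolding Ggrp_def by (rule group.group_subgroup_generated[OF group_BijGroup])

lemma act_mult_c: assumes "(act A :: 'a::field_char_0^2^2 \<Rightarrow> _) \<in> carrier Bsl2" "(act B :: 'a^2^2 \<Rightarrow> _) \<in> carrier Bsl2"
  shows "(act A :: 'a^2^2 \<Rightarrow> _) \<otimes>\<^bsub>Bsl2\<^esub> act B = act (mmul A B)"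
proof -
  have "(act A :: 'a^2^2 \<Rightarrow> _) \<in> Bij sl2" "(act B :: 'a^2^2 \<Rightarrow> _) \<in> Bij sl2" using assms by (simp_all add: BijGroup_def)
  then show ?thesis by (simp add: BijGroup_def compose_act)
qed


definition par :: "int \<Rightarrow> int" where "par x = (if even x then 0 else 1)"
lemma par_eq: "par x = par y \<longleftrightarrow> (even x \<longleftrightarrow> even y)" by (simp add: par_def)
lemma even_par [simp]: "even (par x) \<longleftrightarrow> even x" by (simp add: par_def)
lemma par_par [simp]: "par (par x) = par x" by (simp add: par_def)

fun md2 :: "m3 \<Rightarrow> m3" where
  "md2 (M3 a b c d e f g h i) = M3 (par a) (par b) (par c) (par d) (par e) (par f) (par g) (par h) (par i)"

lemma md2_mmul: "md2 (mmul A B) = md2 (mmul (md2 A) (md2 B))"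
  by (cases A; cases B) (simp only: mmul.simps md2.simps m3.inject par_eq; simp)

lemma md2_md2 [simp]: "md2 (md2 A) = md2 A"
  by (cases A) simp

lemma mmul_mid [simp]: "mmul mid A = A" "mmul A mid = A"
  by (cases A, simp add: mid_def)+

lemma md2_R: "md2 RXm = mid" "md2 RYm = mid" "md2 RZm = mid"
  by (simp_all add: mdefs mid_def par_def)

lemma md2_mmul_R: "md2 R = mid \<Longrightarrow> md2 (mmul R M) = md2 M"
  by (subst md2_mmul) simp

lemma det_mmul_R: "det3 (mmul RXm M) = - det3 M" "det3 (mmul RYm M) = - det3 M" "det3 (mmul RZm M) = - det3 M"
  by (cases M, simp add: mdefs algebra_simps)+

lemma wprod_Nil: "wprod [] = \<one>\<^bsub>Bsl2\<^esub>" by (simp add: wprod_def)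
lemma wprod_Cons: "wprod (r # ws) = r \<otimes>\<^bsub>Bsl2\<^esub> wprod ws" by (simp add: wprod_def)

lemma Wgens_eq: "(Wgens :: ('a::field_char_0^2^2 \<Rightarrow> _) set) = {act RXm, act RYm, act RZm}"
  by (simp add: Wgens_def refl_eqs)

lemma Wgens_carrier: "(Wgens :: ('a::field_char_0^2^2 \<Rightarrow> _) set) \<subseteq> carrier Bsl2"
  by (simp add: Wgens_eq mdefs)

lemma wprod_carrier: "set (ws :: ('a::field_char_0^2^2 \<Rightarrow> 'a^2^2) list) \<subseteq> Wgens \<Longrightarrow> wprod ws \<in> carrier Bsl2"
proof (induction ws)
  case Nil then show ?case by (simp add: wprod_Nil group.is_monoid[OF group_BijGroup])
next
  case (Cons r ws) then show ?case
    using Wgens_carrier[where 'a='a] by (auto simp add: wprod_Cons intro!: monoid.m_closed[OF group.is_monoid[OF group_BijGroup]])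
qed

lemma wprod_append: "set (ws :: ('a::field_char_0^2^2 \<Rightarrow> 'a^2^2) list) \<subseteq> Wgens \<Longrightarrow> set ws' \<subseteq> Wgens \<Longrightarrow>
   wprod (ws @ ws') = wprod ws \<otimes>\<^bsub>Bsl2\<^esub> wprod ws'"
proof (induction ws)
  case Nil then show ?case using wprod_carrier[of ws'] by (simp add: wprod_Nil group.is_monoid[OF group_BijGroup])
next
  case (Cons r ws) then show ?case
    using Wgens_carrier[where 'a='a] wprod_carrier[of ws] wprod_carrier[of ws']
    by (simp add: wprod_Cons monoid.m_assoc[OF group.is_monoid[OF group_BijGroup]] subsetD)
qed

lemma wprod_mat: "set (ws :: ('a::field_char_0^2^2 \<Rightarrow> 'a^2^2) list) \<subseteq> Wgens \<Longrightarrow>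
   \<exists>M. wprod ws = act M \<and> det3 M = (-1) ^ length ws \<and> md2 M = mid"
proof (induction ws)
  case Nil show ?case by (rule exI[of _ mid]) (simp add: wprod_Nil one_Bsl2 mid_def par_def)
next
  case (Cons r ws)
  then obtain M where M: "wprod ws = act M" "det3 M = (-1) ^ length ws" "md2 M = mid" by auto
  have cM: "(act M :: 'a^2^2 \<Rightarrow> _) \<in> carrier Bsl2" using wprod_carrier[of ws] Cons.prems M(1) by simp
  have "r \<in> {act RXm, act RYm, act RZm}" using Cons.prems Wgens_eq[where 'a='a] by auto
  then obtain R where R: "r = act R" "R = RXm \<or> R = RYm \<or> R = RZm" by auto
  have cR: "(act R :: 'a^2^2 \<Rightarrow> _) \<in> carrier Bsl2" using R(2) by (auto simp: mdefs)
  have "wprod (r # ws) = act (mmul R M)"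
    using R(1) M(1) cM cR by (simp add: wprod_Cons act_mult_c)
  moreover have "det3 (mmul R M) = (-1) ^ length (r # ws)"
    using R(2) M(2) det_mmul_R by auto
  moreover have "md2 (mmul R M) = mid"
    using R(2) M(3) md2_R md2_mmul_R by auto
  ultimately show ?case by blast
qed

lemma r_inv: "r \<in> (Wgens :: ('a::field_char_0^2^2 \<Rightarrow> 'a^2^2) set) \<Longrightarrow> inv\<^bsub>Bsl2\<^esub> r = r"
proof -
  assume "r \<in> Wgens"
  then have "r \<in> {act RXm, act RYm, act RZm}" using Wgens_eq[where 'a='a] by auto
  then obtain R where R: "r = act R" "R = RXm \<or> R = RYm \<or> R = RZm" by auto
  then have d: "det3 R = 1 \<or> det3 R = -1" by (auto simp: mdefs)
  have "minv R = R" using R(2) by (auto simp: mdefs minv_def)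
  then show ?thesis using act_inv[OF d, where 'a='a] R(1) by simp
qed

lemma Wset_sub: "w \<in> (Wset :: ('a::field_char_0^2^2 \<Rightarrow> 'a^2^2) set) \<Longrightarrow> \<exists>ws. set ws \<subseteq> Wgens \<and> w = wprod ws"
  unfolding Wset_def
proof (induction rule: generate.induct)
  case one
  have "set [] \<subseteq> (Wgens :: ('a^2^2 \<Rightarrow> 'a^2^2) set) \<and> \<one>\<^bsub>Bsl2\<^esub> = wprod []" by (simp add: wprod_Nil)
  then show ?case by (rule exI)
next
  case (incl h)
  have hc: "h \<in> carrier Bsl2" using incl Wgens_carrier[where 'a='a] by blast
  have "wprod [h] = h" using monoid.r_one[OF group.is_monoid[OF group_BijGroup] hc] by (simp add: wprod_Cons wprod_Nil)
  then have "set [h] \<subseteq> Wgens \<and> h = wprod [h]" using incl by simp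
  then show ?case by (rule exI)
next
  case (inv h)
  have hc: "h \<in> carrier Bsl2" using inv Wgens_carrier[where 'a='a] by blast
  have "wprod [h] = h" using monoid.r_one[OF group.is_monoid[OF group_BijGroup] hc] by (simp add: wprod_Cons wprod_Nil)
  then have "set [h] \<subseteq> Wgens \<and> inv\<^bsub>Bsl2\<^esub> h = wprod [h]" using inv r_inv[of h] by simp
  then show ?case by (rule exI)
next
  case (eng h1 h2)
  obtain ws1 where 1: "set ws1 \<subseteq> Wgens" "h1 = wprod ws1" using eng.IH(1) by blast
  obtain ws2 where 2: "set ws2 \<subseteq> Wgens" "h2 = wprod ws2" using eng.IH(2) by blast
  have "set (ws1 @ ws2) \<subseteq> Wgens \<and> h1 \<otimes>\<^bsub>Bsl2\<^esub> h2 = wprod (ws1 @ ws2)"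
    using 1 2 wprod_append[of ws1 ws2] by simp
  then show ?case by (rule exI)
qed

lemma wprod_Wset: "set (ws :: ('a::field_char_0^2^2 \<Rightarrow> 'a^2^2) list) \<subseteq> Wgens \<Longrightarrow> wprod ws \<in> Wset"
proof (induction ws)
  case Nil show ?case unfolding wprod_Nil Wset_def by (rule generate.one)
next
  case (Cons r ws)
  then have "r \<in> Wgens" "wprod ws \<in> Wset" by auto
  then show ?case unfolding wprod_Cons Wset_def by (metis generate.eng generate.incl)
qed

lemma Wset_eq: "(Wset :: ('a::field_char_0^2^2 \<Rightarrow> 'a^2^2) set) = {wprod ws | ws. set ws \<subseteq> Wgens}"
  using Wset_sub wprod_Wset by blast

lemma neg1_pow_eq: "((-1::int) ^ m = (-1) ^ n) \<Longrightarrow> (even m \<longleftrightarrow> even n)"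
  by (cases "even m"; cases "even n") auto

lemma wlen_word: assumes "set (ws :: ('a::field_char_0^2^2 \<Rightarrow> 'a^2^2) list) \<subseteq> Wgens"
  shows "even (wlen (wprod ws)) \<longleftrightarrow> even (length ws)"
proof -
  let ?P = "\<lambda>n. \<exists>ws'. set ws' \<subseteq> Wgens \<and> length ws' = n \<and> wprod ws' = wprod ws"
  have "?P (length ws)" using assms by blast
  then have "?P (Least ?P)" by (rule LeastI_ex[where P = ?P, OF exI])
  moreover have "wlen (wprod ws) = Least ?P" unfolding wlen_def by (rule refl)
  ultimately obtain ws' where ws': "set ws' \<subseteq> Wgens" "length ws' = wlen (wprod ws)" "wprod ws' = wprod ws"
    by auto
  obtain M where M: "wprod ws = act M" "det3 M = (-1) ^ length ws" using wprod_mat[OF assms] by blast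
  obtain M' where M': "wprod ws' = act M'" "det3 M' = (-1) ^ length ws'" using wprod_mat[OF ws'(1)] by blast
  have "(act M' :: 'a^2^2 \<Rightarrow> _) = act M" using M(1) M'(1) ws'(3) by argo
  then have "M' = M" by (rule act_inj)
  then have "(-1::int) ^ length ws' = (-1) ^ length ws" using M(2) M'(2) by simp
  from neg1_pow_eq[OF this] show ?thesis using ws'(2) by simp
qed

lemma Wplus_eq: "(Wplus :: ('a::field_char_0^2^2 \<Rightarrow> 'a^2^2) set) = {wprod ws | ws. set ws \<subseteq> Wgens \<and> even (length ws)}"
proof (rule equalityI; rule subsetI)
  fix w :: "'a^2^2 \<Rightarrow> 'a^2^2"
  assume "w \<in> Wplus"
  then obtain ws where "w = wprod ws" "set ws \<subseteq> Wgens" "even (wlen w)"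
    unfolding Wplus_def Wset_eq by auto
  then show "w \<in> {wprod ws | ws. set ws \<subseteq> Wgens \<and> even (length ws)}"
    using wlen_word[of ws] by auto
next
  fix w :: "'a^2^2 \<Rightarrow> 'a^2^2"
  assume "w \<in> {wprod ws | ws. set ws \<subseteq> Wgens \<and> even (length ws)}"
  then obtain ws where "w = wprod ws" "set ws \<subseteq> Wgens" "even (length ws)" by auto
  then show "w \<in> Wplus"
    using wlen_word[of ws] unfolding Wplus_def Wset_eq by auto
qed

lemma Wplus_mem: "set (ws :: ('a::field_char_0^2^2 \<Rightarrow> 'a^2^2) list) \<subseteq> Wgens \<Longrightarrow> even (length ws) \<Longrightarrow> wprod ws \<in> Wplus"
  unfolding Wplus_eq by (intro CollectI exI[of _ ws]) simp

lemma Wplus_mult: "w1 \<in> (Wplus :: ('a::field_char_0^2^2 \<Rightarrow> 'a^2^2) set) \<Longrightarrow> w2 \<in> Wplus \<Longrightarrow> w1 \<otimes>\<^bsub>Bsl2\<^esub> w2 \<in> Wplus"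
proof -
  assume "w1 \<in> Wplus" "w2 \<in> Wplus"
  then obtain ws1 ws2 where "w1 = wprod ws1" "set ws1 \<subseteq> Wgens" "even (length ws1)"
    "w2 = wprod ws2" "set ws2 \<subseteq> Wgens" "even (length ws2)" unfolding Wplus_eq by auto
  then show ?thesis using wprod_append[of ws1 ws2] Wplus_mem[of "ws1 @ ws2"] by simp
qed

lemma Wplus_mat: "w \<in> (Wplus :: ('a::field_char_0^2^2 \<Rightarrow> 'a^2^2) set) \<Longrightarrow> \<exists>M. w = act M \<and> md2 M = mid"
proof -
  assume "w \<in> Wplus"
  then obtain ws where "w = wprod ws" "set ws \<subseteq> Wgens" unfolding Wplus_eq by auto
  then show ?thesis using wprod_mat[of ws] by auto
qed

lemma Wplus_carrier: "w \<in> (Wplus :: ('a::field_char_0^2^2 \<Rightarrow> 'a^2^2) set) \<Longrightarrow> w \<in> carrier Bsl2"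
proof -
  assume "w \<in> Wplus"
  then obtain ws where "w = wprod ws" "set ws \<subseteq> Wgens" unfolding Wplus_eq by auto
  then show ?thesis using wprod_carrier[of ws] by auto
qed

section \<open>Permutation matrices and phi\<close>

definition pm :: "(nat \<Rightarrow> nat) \<Rightarrow> m3" where
  "pm p = M3 (of_bool (p 1 = 1)) (of_bool (p 2 = 1)) (of_bool (p 3 = 1))
             (of_bool (p 1 = 2)) (of_bool (p 2 = 2)) (of_bool (p 3 = 2))
             (of_bool (p 1 = 3)) (of_bool (p 2 = 3)) (of_bool (p 3 = 3))"

lemma par_of_bool [simp]: "par (of_bool P) = of_bool P"
  by (cases P) (simp_all add: par_def)

lemma md2_pm [simp]: "md2 (pm p) = pm p"
  by (simp add: pm_def)

lemma mmul_pm: assumes "q 1 \<in> {1,2,3}" "q 2 \<in> {1,2,3}" "q 3 \<in> {1,2,3}"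
  shows "mmul (pm p) (pm q) = pm (p \<circ> q)"
proof -
  have "q 1 = 1 \<or> q 1 = 2 \<or> q 1 = 3" "q 2 = 1 \<or> q 2 = 2 \<or> q 2 = 3" "q 3 = 1 \<or> q 3 = 2 \<or> q 3 = 3"
    using assms by auto
  then show ?thesis by (elim disjE; simp add: pm_def)
qed

lemma perm_vals: assumes "p permutes {1..3::nat}"
  shows "p 1 \<in> {1,2,3}" "p 2 \<in> {1,2,3}" "p 3 \<in> {1,2,3}"
  using permutes_in_image[OF assms, of 1] permutes_in_image[OF assms, of 2] permutes_in_image[OF assms, of 3]
  by auto

lemma perm_ext: assumes "p permutes {1..3::nat}" "q permutes {1..3::nat}"
  "p 1 = q 1" "p 2 = q 2" "p 3 = q 3"
  shows "p = q"
proof (rule ext)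
  fix j :: nat
  show "p j = q j"
  proof (cases "j \<in> {1..3}")
    case True
    then have "j = 1 \<or> j = 2 \<or> j = 3" by auto
    then show ?thesis using assms by auto
  next
    case False
    then show ?thesis using permutes_not_in[OF assms(1)] permutes_not_in[OF assms(2)] by simp
  qed
qed

lemma pm_inj: assumes "p permutes {1..3::nat}" "q permutes {1..3::nat}" "pm p = pm q"
  shows "p = q"
proof -
  have e: "(p j = i) = (q j = i)" if "i \<in> {1,2,3}" "j \<in> {1,2,3::nat}" for i j
    using assms(3) that by (auto simp: pm_def)
  have "p 1 = q 1" using e[of "p 1" 1] perm_vals[OF assms(1)] by auto
  moreover have "p 2 = q 2" using e[of "p 2" 2] perm_vals[OF assms(1)] by auto
  moreover have "p 3 = q 3" using e[of "p 3" 3] perm_vals[OF assms(1)] by auto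
  ultimately show ?thesis using perm_ext assms by blast
qed

lemma md2_mmul_pm: assumes "md2 A = pm p" "md2 B = pm q" "q permutes {1..3}"
  shows "md2 (mmul A B) = pm (p \<circ> q)"
proof -
  have "md2 (mmul A B) = md2 (mmul (pm p) (pm q))"
    by (subst md2_mmul) (simp only: assms(1,2))
  also have "\<dots> = pm (p \<circ> q)"
    by (simp only: mmul_pm[OF perm_vals[OF assms(3)]] md2_pm)
  finally show ?thesis .
qed

definition phi :: "('a::field_char_0^2^2 \<Rightarrow> 'a^2^2) \<Rightarrow> (nat \<Rightarrow> nat)" where
  "phi g = (THE p. p permutes {1..3} \<and> (\<exists>A. g = act A \<and> md2 A = pm p))"

lemma phi_act: assumes "p permutes {1..3}" "md2 A = pm p"
  shows "phi (act A :: 'a::field_char_0^2^2 \<Rightarrow> _) = p"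
  unfolding phi_def
proof (rule the_equality)
  show "p permutes {1..3} \<and> (\<exists>B. (act A :: 'a^2^2 \<Rightarrow> _) = act B \<and> md2 B = pm p)" using assms by blast
next
  fix q assume q: "q permutes {1..3} \<and> (\<exists>B. (act A :: 'a^2^2 \<Rightarrow> _) = act B \<and> md2 B = pm q)"
  then obtain B where B: "(act A :: 'a^2^2 \<Rightarrow> _) = act B" "md2 B = pm q" by blast
  have "A = B" using act_inj[OF B(1)] .
  then have "pm q = pm p" using B(2) assms(2) by simp
  then show "q = p" using pm_inj q assms(1) by blast
qed

lemma t_perm: "Transposition.transpose 2 3 permutes {1..3::nat}" "Transposition.transpose 1 3 permutes {1..3::nat}"
  "Transposition.transpose 1 2 permutes {1..3::nat}"
  by (auto intro!: permutes_swap_id)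

lemma md2_S: "md2 SXm = pm (Transposition.transpose 2 3)" "md2 SYm = pm (Transposition.transpose 1 3)" "md2 SZm = pm (Transposition.transpose 1 2)"
  "md2 (minv SXm) = pm (Transposition.transpose 2 3)" "md2 (minv SYm) = pm (Transposition.transpose 1 3)" "md2 (minv SZm) = pm (Transposition.transpose 1 2)"
  by (simp_all add: mdefs pm_def par_def minv_def Transposition.transpose_def)

lemma md2_T: "md2 TXm \<noteq> mid" "md2 TYm \<noteq> mid" "md2 TZm \<noteq> mid" "md2 RHOm \<noteq> mid" "md2 RHO2m \<noteq> mid"
  by (simp_all add: mdefs mid_def par_def)

lemma pm_id: "pm id = mid"
  by (simp add: pm_def mid_def)

lemma gens_carrier: "{sigma_x, sigma_y, sigma_z} \<subseteq> carrier (Bsl2 :: ('a::field_char_0^2^2 \<Rightarrow> _) monoid)"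
  by (simp add: sig_eqs mdefs)

lemma det_S: "det3 SXm = 1" "det3 SYm = 1" "det3 SZm = 1"
  by (simp_all add: mdefs)

lemma inv_gen: assumes d: "det3 S = 1 \<or> det3 S = -1" and "md2 (minv S) = pm t" "t permutes {1..3}"
  shows "inv\<^bsub>Bsl2\<^esub> (act S :: 'a::field_char_0^2^2 \<Rightarrow> _) \<in> carrier Bsl2 \<and>
    (\<exists>A p. inv\<^bsub>Bsl2\<^esub> (act S :: 'a^2^2 \<Rightarrow> _) = act A \<and> p permutes {1..3} \<and> md2 A = pm p)"
proof -
  have "inv\<^bsub>Bsl2\<^esub> (act S :: 'a^2^2 \<Rightarrow> _) = act (minv S)" using act_inv[OF d] by simp
  moreover have "(act (minv S) :: 'a^2^2 \<Rightarrow> _) \<in> carrier Bsl2"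
    using act_Bij_inv[of "minv S" S] minv_ok[OF d] by (simp add: BijGroup_def)
  ultimately show ?thesis using assms(2,3) by auto
qed

lemma G_inv: assumes "g \<in> carrier (Ggrp :: ('a::field_char_0^2^2 \<Rightarrow> _) monoid)"
  shows "g \<in> carrier Bsl2 \<and> (\<exists>A p. g = act A \<and> p permutes {1..3} \<and> md2 A = pm p)"
  using assms unfolding Ggrp_carrier
proof (induction rule: generate.induct)
  case one
  have "\<one>\<^bsub>Bsl2\<^esub> = (act mid :: 'a^2^2 \<Rightarrow> _) \<and> id permutes {1..3} \<and> md2 mid = pm id"
    by (simp add: one_Bsl2 pm_id mid_def par_def)
  then show ?case by (metis group.is_monoid[OF group_BijGroup] monoid.one_closed)
next
  case (incl h)
  then show ?case
    using md2_S t_perm gens_carrier[where 'a='a] by (auto simp: sig_eqs)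
next
  case (inv h)
  then have "h = act SXm \<or> h = act SYm \<or> h = act SZm" by (simp add: sig_eqs)
  then show ?case
    using inv_gen[OF disjI1[OF det_S(1)] md2_S(4) t_perm(1), where 'a='a]
      inv_gen[OF disjI1[OF det_S(2)] md2_S(5) t_perm(2), where 'a='a]
      inv_gen[OF disjI1[OF det_S(3)] md2_S(6) t_perm(3), where 'a='a]
    by (elim disjE) simp_all
next
  case (eng g1 g2)
  from eng.IH obtain A p B q where AB: "g1 = act A" "p permutes {1..3}" "md2 A = pm p"
    "g2 = act B" "q permutes {1..3}" "md2 B = pm q" and c: "g1 \<in> carrier Bsl2" "g2 \<in> carrier Bsl2" by blast
  have cA: "(act A :: 'a^2^2 \<Rightarrow> _) \<in> carrier Bsl2" using c(1) unfolding AB(1) .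
  have cB: "(act B :: 'a^2^2 \<Rightarrow> _) \<in> carrier Bsl2" using c(2) unfolding AB(4) .
  have "g1 \<otimes>\<^bsub>Bsl2\<^esub> g2 = act (mmul A B)" unfolding AB(1) AB(4) by (rule act_mult_c[OF cA cB])
  moreover have "md2 (mmul A B) = pm (p \<circ> q)"
    by (rule md2_mmul_pm[OF AB(3) AB(6) AB(5)])
  moreover have "p \<circ> q permutes {1..3}" using permutes_compose[OF AB(5) AB(2)] .
  moreover have "g1 \<otimes>\<^bsub>Bsl2\<^esub> g2 \<in> carrier Bsl2"
    using c by (metis group.is_monoid[OF group_BijGroup] monoid.m_closed)
  ultimately show ?case by blast
qed

lemma phi_hom: "phi \<in> hom (Ggrp :: ('a::field_char_0^2^2 \<Rightarrow> _) monoid) (sym_group 3)"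
proof (rule homI)
  fix g assume "g \<in> carrier (Ggrp :: ('a::field_char_0^2^2 \<Rightarrow> _) monoid)"
  then obtain A p where A: "g = act A" "p permutes {1..3}" "md2 A = pm p" using G_inv by blast
  then show "phi g \<in> carrier (sym_group 3)" using phi_act[OF A(2,3), where 'a='a] by (simp add: sym_group_carrier)
next
  fix g h assume gh: "g \<in> carrier (Ggrp :: ('a::field_char_0^2^2 \<Rightarrow> _) monoid)" "h \<in> carrier (Ggrp :: ('a::field_char_0^2^2 \<Rightarrow> _) monoid)"
  obtain A p where A: "g = act A" "p permutes {1..3}" "md2 A = pm p" and cg: "g \<in> carrier Bsl2" using G_inv[OF gh(1)] by blast
  obtain B q where B: "h = act B" "q permutes {1..3}" "md2 B = pm q" and ch: "h \<in> carrier Bsl2" using G_inv[OF gh(2)] by blast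
  have cA: "(act A :: 'a^2^2 \<Rightarrow> _) \<in> carrier Bsl2" using cg unfolding A(1) .
  have cB: "(act B :: 'a^2^2 \<Rightarrow> _) \<in> carrier Bsl2" using ch unfolding B(1) .
  have prod: "g \<otimes>\<^bsub>Ggrp\<^esub> h = act (mmul A B)" unfolding Ggrp_mult A(1) B(1) by (rule act_mult_c[OF cA cB])
  have pq: "phi (g \<otimes>\<^bsub>Ggrp\<^esub> h) = p \<circ> q" unfolding prod
    by (rule phi_act[OF permutes_compose[OF B(2) A(2)] md2_mmul_pm[OF A(3) B(3) B(2)]])
  have pg: "phi g = p" unfolding A(1) by (rule phi_act[OF A(2,3)])
  have ph: "phi h = q" unfolding B(1) by (rule phi_act[OF B(2,3)])
  show "phi (g \<otimes>\<^bsub>Ggrp\<^esub> h) = phi g \<otimes>\<^bsub>sym_group 3\<^esub> phi h"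
    by (simp only: pq pg ph sym_group_mult)
qed


section \<open>Covering\<close>

definition Tm :: "m3 set" where "Tm = {mid, TXm, TYm, TZm, RHOm, RHO2m}"

lemma Bmon: "monoid (Bsl2 :: ('a::field_char_0^2^2 \<Rightarrow> _) monoid)"
  by (rule group.is_monoid[OF group_BijGroup])

lemma Tm_carrier: "h \<in> Tm \<Longrightarrow> (act h :: 'a::field_char_0^2^2 \<Rightarrow> _) \<in> carrier Bsl2"
  by (auto simp: Tm_def mdefs mid_def)

lemma st_X_1: "\<exists>h'\<in>Tm. \<exists>w0\<in>(Wplus :: ('a::field_char_0^2^2 \<Rightarrow> 'a^2^2) set). act SXm \<otimes>\<^bsub>Bsl2\<^esub> act mid = act h' \<otimes>\<^bsub>Bsl2\<^esub> w0"
  apply (rule bexI[where x="TXm"])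
   apply (rule bexI[where x="wprod [refl ex, refl ez]"])
    apply (simp add: wprod_Cons wprod_Nil one_Bsl2 refl_eqs mdefs mid_def minv_def)
   apply (rule Wplus_mem) apply (simp add: Wgens_def) apply simp
  apply (simp add: Tm_def)
  done

lemma st_X_tx: "\<exists>h'\<in>Tm. \<exists>w0\<in>(Wplus :: ('a::field_char_0^2^2 \<Rightarrow> 'a^2^2) set). act SXm \<otimes>\<^bsub>Bsl2\<^esub> act TXm = act h' \<otimes>\<^bsub>Bsl2\<^esub> w0"
  apply (rule bexI[where x="mid"])
   apply (rule bexI[where x="wprod [refl ey, refl ex]"])
    apply (simp add: wprod_Cons wprod_Nil one_Bsl2 refl_eqs mdefs mid_def minv_def)
   apply (rule Wplus_mem) apply (simp add: Wgens_def) apply simp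
  apply (simp add: Tm_def)
  done

lemma st_X_ty: "\<exists>h'\<in>Tm. \<exists>w0\<in>(Wplus :: ('a::field_char_0^2^2 \<Rightarrow> 'a^2^2) set). act SXm \<otimes>\<^bsub>Bsl2\<^esub> act TYm = act h' \<otimes>\<^bsub>Bsl2\<^esub> w0"
  apply (rule bexI[where x="RHOm"])
   apply (rule bexI[where x="wprod [refl ex, refl ey]"])
    apply (simp add: wprod_Cons wprod_Nil one_Bsl2 refl_eqs mdefs mid_def minv_def)
   apply (rule Wplus_mem) apply (simp add: Wgens_def) apply simp
  apply (simp add: Tm_def)
  done

lemma st_X_tz: "\<exists>h'\<in>Tm. \<exists>w0\<in>(Wplus :: ('a::field_char_0^2^2 \<Rightarrow> 'a^2^2) set). act SXm \<otimes>\<^bsub>Bsl2\<^esub> act TZm = act h' \<otimes>\<^bsub>Bsl2\<^esub> w0"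
  apply (rule bexI[where x="RHO2m"])
   apply (rule bexI[where x="wprod []"])
    apply (simp add: wprod_Cons wprod_Nil one_Bsl2 refl_eqs mdefs mid_def minv_def)
   apply (rule Wplus_mem) apply (simp add: Wgens_def) apply simp
  apply (simp add: Tm_def)
  done

lemma st_X_r: "\<exists>h'\<in>Tm. \<exists>w0\<in>(Wplus :: ('a::field_char_0^2^2 \<Rightarrow> 'a^2^2) set). act SXm \<otimes>\<^bsub>Bsl2\<^esub> act RHOm = act h' \<otimes>\<^bsub>Bsl2\<^esub> w0"
  apply (rule bexI[where x="TYm"])
   apply (rule bexI[where x="wprod []"])
    apply (simp add: wprod_Cons wprod_Nil one_Bsl2 refl_eqs mdefs mid_def minv_def)
   apply (rule Wplus_mem) apply (simp add: Wgens_def) apply simp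
  apply (simp add: Tm_def)
  done

lemma st_X_rr: "\<exists>h'\<in>Tm. \<exists>w0\<in>(Wplus :: ('a::field_char_0^2^2 \<Rightarrow> 'a^2^2) set). act SXm \<otimes>\<^bsub>Bsl2\<^esub> act RHO2m = act h' \<otimes>\<^bsub>Bsl2\<^esub> w0"
  apply (rule bexI[where x="TZm"])
   apply (rule bexI[where x="wprod [refl ez, refl ex]"])
    apply (simp add: wprod_Cons wprod_Nil one_Bsl2 refl_eqs mdefs mid_def minv_def)
   apply (rule Wplus_mem) apply (simp add: Wgens_def) apply simp
  apply (simp add: Tm_def)
  done

lemma st_X: assumes "h \<in> Tm" shows "\<exists>h'\<in>Tm. \<exists>w0\<in>(Wplus :: ('a::field_char_0^2^2 \<Rightarrow> 'a^2^2) set). act SXm \<otimes>\<^bsub>Bsl2\<^esub> act h = act h' \<otimes>\<^bsub>Bsl2\<^esub> w0"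
proof -
  have "h = mid \<or> h = TXm \<or> h = TYm \<or> h = TZm \<or> h = RHOm \<or> h = RHO2m" using assms by (simp add: Tm_def)
  then show ?thesis using st_X_1 st_X_tx st_X_ty st_X_tz st_X_r st_X_rr by (elim disjE) (simp_all only:)
qed

lemma st_Y_1: "\<exists>h'\<in>Tm. \<exists>w0\<in>(Wplus :: ('a::field_char_0^2^2 \<Rightarrow> 'a^2^2) set). act SYm \<otimes>\<^bsub>Bsl2\<^esub> act mid = act h' \<otimes>\<^bsub>Bsl2\<^esub> w0"
  apply (rule bexI[where x="TYm"])
   apply (rule bexI[where x="wprod [refl ey, refl ex]"])
    apply (simp add: wprod_Cons wprod_Nil one_Bsl2 refl_eqs mdefs mid_def minv_def)
   apply (rule Wplus_mem) apply (simp add: Wgens_def) apply simp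
  apply (simp add: Tm_def)
  done

lemma st_Y_tx: "\<exists>h'\<in>Tm. \<exists>w0\<in>(Wplus :: ('a::field_char_0^2^2 \<Rightarrow> 'a^2^2) set). act SYm \<otimes>\<^bsub>Bsl2\<^esub> act TXm = act h' \<otimes>\<^bsub>Bsl2\<^esub> w0"
  apply (rule bexI[where x="RHO2m"])
   apply (rule bexI[where x="wprod []"])
    apply (simp add: wprod_Cons wprod_Nil one_Bsl2 refl_eqs mdefs mid_def minv_def)
   apply (rule Wplus_mem) apply (simp add: Wgens_def) apply simp
  apply (simp add: Tm_def)
  done

lemma st_Y_ty: "\<exists>h'\<in>Tm. \<exists>w0\<in>(Wplus :: ('a::field_char_0^2^2 \<Rightarrow> 'a^2^2) set). act SYm \<otimes>\<^bsub>Bsl2\<^esub> act TYm = act h' \<otimes>\<^bsub>Bsl2\<^esub> w0"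
  apply (rule bexI[where x="mid"])
   apply (rule bexI[where x="wprod [refl ez, refl ey]"])
    apply (simp add: wprod_Cons wprod_Nil one_Bsl2 refl_eqs mdefs mid_def minv_def)
   apply (rule Wplus_mem) apply (simp add: Wgens_def) apply simp
  apply (simp add: Tm_def)
  done

lemma st_Y_tz: "\<exists>h'\<in>Tm. \<exists>w0\<in>(Wplus :: ('a::field_char_0^2^2 \<Rightarrow> 'a^2^2) set). act SYm \<otimes>\<^bsub>Bsl2\<^esub> act TZm = act h' \<otimes>\<^bsub>Bsl2\<^esub> w0"
  apply (rule bexI[where x="RHOm"])
   apply (rule bexI[where x="wprod [refl ey, refl ez]"])
    apply (simp add: wprod_Cons wprod_Nil one_Bsl2 refl_eqs mdefs mid_def minv_def)
   apply (rule Wplus_mem) apply (simp add: Wgens_def) apply simp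
  apply (simp add: Tm_def)
  done

lemma st_Y_r: "\<exists>h'\<in>Tm. \<exists>w0\<in>(Wplus :: ('a::field_char_0^2^2 \<Rightarrow> 'a^2^2) set). act SYm \<otimes>\<^bsub>Bsl2\<^esub> act RHOm = act h' \<otimes>\<^bsub>Bsl2\<^esub> w0"
  apply (rule bexI[where x="TZm"])
   apply (rule bexI[where x="wprod []"])
    apply (simp add: wprod_Cons wprod_Nil one_Bsl2 refl_eqs mdefs mid_def minv_def)
   apply (rule Wplus_mem) apply (simp add: Wgens_def) apply simp
  apply (simp add: Tm_def)
  done

lemma st_Y_rr: "\<exists>h'\<in>Tm. \<exists>w0\<in>(Wplus :: ('a::field_char_0^2^2 \<Rightarrow> 'a^2^2) set). act SYm \<otimes>\<^bsub>Bsl2\<^esub> act RHO2m = act h' \<otimes>\<^bsub>Bsl2\<^esub> w0"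
  apply (rule bexI[where x="TXm"])
   apply (rule bexI[where x="wprod [refl ex, refl ey]"])
    apply (simp add: wprod_Cons wprod_Nil one_Bsl2 refl_eqs mdefs mid_def minv_def)
   apply (rule Wplus_mem) apply (simp add: Wgens_def) apply simp
  apply (simp add: Tm_def)
  done

lemma st_Y: assumes "h \<in> Tm" shows "\<exists>h'\<in>Tm. \<exists>w0\<in>(Wplus :: ('a::field_char_0^2^2 \<Rightarrow> 'a^2^2) set). act SYm \<otimes>\<^bsub>Bsl2\<^esub> act h = act h' \<otimes>\<^bsub>Bsl2\<^esub> w0"
proof -
  have "h = mid \<or> h = TXm \<or> h = TYm \<or> h = TZm \<or> h = RHOm \<or> h = RHO2m" using assms by (simp add: Tm_def)
  then show ?thesis using st_Y_1 st_Y_tx st_Y_ty st_Y_tz st_Y_r st_Y_rr by (elim disjE) (simp_all only:)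
qed

lemma st_Z_1: "\<exists>h'\<in>Tm. \<exists>w0\<in>(Wplus :: ('a::field_char_0^2^2 \<Rightarrow> 'a^2^2) set). act SZm \<otimes>\<^bsub>Bsl2\<^esub> act mid = act h' \<otimes>\<^bsub>Bsl2\<^esub> w0"
  apply (rule bexI[where x="TZm"])
   apply (rule bexI[where x="wprod [refl ez, refl ey]"])
    apply (simp add: wprod_Cons wprod_Nil one_Bsl2 refl_eqs mdefs mid_def minv_def)
   apply (rule Wplus_mem) apply (simp add: Wgens_def) apply simp
  apply (simp add: Tm_def)
  done

lemma st_Z_tx: "\<exists>h'\<in>Tm. \<exists>w0\<in>(Wplus :: ('a::field_char_0^2^2 \<Rightarrow> 'a^2^2) set). act SZm \<otimes>\<^bsub>Bsl2\<^esub> act TXm = act h' \<otimes>\<^bsub>Bsl2\<^esub> w0"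
  apply (rule bexI[where x="RHOm"])
   apply (rule bexI[where x="wprod [refl ez, refl ex]"])
    apply (simp add: wprod_Cons wprod_Nil one_Bsl2 refl_eqs mdefs mid_def minv_def)
   apply (rule Wplus_mem) apply (simp add: Wgens_def) apply simp
  apply (simp add: Tm_def)
  done

lemma st_Z_ty: "\<exists>h'\<in>Tm. \<exists>w0\<in>(Wplus :: ('a::field_char_0^2^2 \<Rightarrow> 'a^2^2) set). act SZm \<otimes>\<^bsub>Bsl2\<^esub> act TYm = act h' \<otimes>\<^bsub>Bsl2\<^esub> w0"
  apply (rule bexI[where x="RHO2m"])
   apply (rule bexI[where x="wprod []"])
    apply (simp add: wprod_Cons wprod_Nil one_Bsl2 refl_eqs mdefs mid_def minv_def)
   apply (rule Wplus_mem) apply (simp add: Wgens_def) apply simp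
  apply (simp add: Tm_def)
  done

lemma st_Z_tz: "\<exists>h'\<in>Tm. \<exists>w0\<in>(Wplus :: ('a::field_char_0^2^2 \<Rightarrow> 'a^2^2) set). act SZm \<otimes>\<^bsub>Bsl2\<^esub> act TZm = act h' \<otimes>\<^bsub>Bsl2\<^esub> w0"
  apply (rule bexI[where x="mid"])
   apply (rule bexI[where x="wprod [refl ex, refl ez]"])
    apply (simp add: wprod_Cons wprod_Nil one_Bsl2 refl_eqs mdefs mid_def minv_def)
   apply (rule Wplus_mem) apply (simp add: Wgens_def) apply simp
  apply (simp add: Tm_def)
  done

lemma st_Z_r: "\<exists>h'\<in>Tm. \<exists>w0\<in>(Wplus :: ('a::field_char_0^2^2 \<Rightarrow> 'a^2^2) set). act SZm \<otimes>\<^bsub>Bsl2\<^esub> act RHOm = act h' \<otimes>\<^bsub>Bsl2\<^esub> w0"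
  apply (rule bexI[where x="TXm"])
   apply (rule bexI[where x="wprod []"])
    apply (simp add: wprod_Cons wprod_Nil one_Bsl2 refl_eqs mdefs mid_def minv_def)
   apply (rule Wplus_mem) apply (simp add: Wgens_def) apply simp
  apply (simp add: Tm_def)
  done

lemma st_Z_rr: "\<exists>h'\<in>Tm. \<exists>w0\<in>(Wplus :: ('a::field_char_0^2^2 \<Rightarrow> 'a^2^2) set). act SZm \<otimes>\<^bsub>Bsl2\<^esub> act RHO2m = act h' \<otimes>\<^bsub>Bsl2\<^esub> w0"
  apply (rule bexI[where x="TYm"])
   apply (rule bexI[where x="wprod [refl ey, refl ez]"])
    apply (simp add: wprod_Cons wprod_Nil one_Bsl2 refl_eqs mdefs mid_def minv_def)
   apply (rule Wplus_mem) apply (simp add: Wgens_def) apply simp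
  apply (simp add: Tm_def)
  done

lemma st_Z: assumes "h \<in> Tm" shows "\<exists>h'\<in>Tm. \<exists>w0\<in>(Wplus :: ('a::field_char_0^2^2 \<Rightarrow> 'a^2^2) set). act SZm \<otimes>\<^bsub>Bsl2\<^esub> act h = act h' \<otimes>\<^bsub>Bsl2\<^esub> w0"
proof -
  have "h = mid \<or> h = TXm \<or> h = TYm \<or> h = TZm \<or> h = RHOm \<or> h = RHO2m" using assms by (simp add: Tm_def)
  then show ?thesis using st_Z_1 st_Z_tx st_Z_ty st_Z_tz st_Z_r st_Z_rr by (elim disjE) (simp_all only:)
qed

lemma st_Xi_1: "\<exists>h'\<in>Tm. \<exists>w0\<in>(Wplus :: ('a::field_char_0^2^2 \<Rightarrow> 'a^2^2) set). act (minv SXm) \<otimes>\<^bsub>Bsl2\<^esub> act mid = act h' \<otimes>\<^bsub>Bsl2\<^esub> w0"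
  apply (rule bexI[where x="TXm"])
   apply (rule bexI[where x="wprod [refl ex, refl ey]"])
    apply (simp add: wprod_Cons wprod_Nil one_Bsl2 refl_eqs mdefs mid_def minv_def)
   apply (rule Wplus_mem) apply (simp add: Wgens_def) apply simp
  apply (simp add: Tm_def)
  done

lemma st_Xi_tx: "\<exists>h'\<in>Tm. \<exists>w0\<in>(Wplus :: ('a::field_char_0^2^2 \<Rightarrow> 'a^2^2) set). act (minv SXm) \<otimes>\<^bsub>Bsl2\<^esub> act TXm = act h' \<otimes>\<^bsub>Bsl2\<^esub> w0"
  apply (rule bexI[where x="mid"])
   apply (rule bexI[where x="wprod [refl ez, refl ex]"])
    apply (simp add: wprod_Cons wprod_Nil one_Bsl2 refl_eqs mdefs mid_def minv_def)
   apply (rule Wplus_mem) apply (simp add: Wgens_def) apply simp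
  apply (simp add: Tm_def)
  done

lemma st_Xi_ty: "\<exists>h'\<in>Tm. \<exists>w0\<in>(Wplus :: ('a::field_char_0^2^2 \<Rightarrow> 'a^2^2) set). act (minv SXm) \<otimes>\<^bsub>Bsl2\<^esub> act TYm = act h' \<otimes>\<^bsub>Bsl2\<^esub> w0"
  apply (rule bexI[where x="RHOm"])
   apply (rule bexI[where x="wprod []"])
    apply (simp add: wprod_Cons wprod_Nil one_Bsl2 refl_eqs mdefs mid_def minv_def)
   apply (rule Wplus_mem) apply (simp add: Wgens_def) apply simp
  apply (simp add: Tm_def)
  done

lemma st_Xi_tz: "\<exists>h'\<in>Tm. \<exists>w0\<in>(Wplus :: ('a::field_char_0^2^2 \<Rightarrow> 'a^2^2) set). act (minv SXm) \<otimes>\<^bsub>Bsl2\<^esub> act TZm = act h' \<otimes>\<^bsub>Bsl2\<^esub> w0"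
  apply (rule bexI[where x="RHO2m"])
   apply (rule bexI[where x="wprod [refl ex, refl ez]"])
    apply (simp add: wprod_Cons wprod_Nil one_Bsl2 refl_eqs mdefs mid_def minv_def)
   apply (rule Wplus_mem) apply (simp add: Wgens_def) apply simp
  apply (simp add: Tm_def)
  done

lemma st_Xi_r: "\<exists>h'\<in>Tm. \<exists>w0\<in>(Wplus :: ('a::field_char_0^2^2 \<Rightarrow> 'a^2^2) set). act (minv SXm) \<otimes>\<^bsub>Bsl2\<^esub> act RHOm = act h' \<otimes>\<^bsub>Bsl2\<^esub> w0"
  apply (rule bexI[where x="TYm"])
   apply (rule bexI[where x="wprod [refl ey, refl ex]"])
    apply (simp add: wprod_Cons wprod_Nil one_Bsl2 refl_eqs mdefs mid_def minv_def)
   apply (rule Wplus_mem) apply (simp add: Wgens_def) apply simp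
  apply (simp add: Tm_def)
  done

lemma st_Xi_rr: "\<exists>h'\<in>Tm. \<exists>w0\<in>(Wplus :: ('a::field_char_0^2^2 \<Rightarrow> 'a^2^2) set). act (minv SXm) \<otimes>\<^bsub>Bsl2\<^esub> act RHO2m = act h' \<otimes>\<^bsub>Bsl2\<^esub> w0"
  apply (rule bexI[where x="TZm"])
   apply (rule bexI[where x="wprod []"])
    apply (simp add: wprod_Cons wprod_Nil one_Bsl2 refl_eqs mdefs mid_def minv_def)
   apply (rule Wplus_mem) apply (simp add: Wgens_def) apply simp
  apply (simp add: Tm_def)
  done

lemma st_Xi: assumes "h \<in> Tm" shows "\<exists>h'\<in>Tm. \<exists>w0\<in>(Wplus :: ('a::field_char_0^2^2 \<Rightarrow> 'a^2^2) set). act (minv SXm) \<otimes>\<^bsub>Bsl2\<^esub> act h = act h' \<otimes>\<^bsub>Bsl2\<^esub> w0"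
proof -
  have "h = mid \<or> h = TXm \<or> h = TYm \<or> h = TZm \<or> h = RHOm \<or> h = RHO2m" using assms by (simp add: Tm_def)
  then show ?thesis using st_Xi_1 st_Xi_tx st_Xi_ty st_Xi_tz st_Xi_r st_Xi_rr by (elim disjE) (simp_all only:)
qed

lemma st_Yi_1: "\<exists>h'\<in>Tm. \<exists>w0\<in>(Wplus :: ('a::field_char_0^2^2 \<Rightarrow> 'a^2^2) set). act (minv SYm) \<otimes>\<^bsub>Bsl2\<^esub> act mid = act h' \<otimes>\<^bsub>Bsl2\<^esub> w0"
  apply (rule bexI[where x="TYm"])
   apply (rule bexI[where x="wprod [refl ey, refl ez]"])
    apply (simp add: wprod_Cons wprod_Nil one_Bsl2 refl_eqs mdefs mid_def minv_def)
   apply (rule Wplus_mem) apply (simp add: Wgens_def) apply simp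
  apply (simp add: Tm_def)
  done

lemma st_Yi_tx: "\<exists>h'\<in>Tm. \<exists>w0\<in>(Wplus :: ('a::field_char_0^2^2 \<Rightarrow> 'a^2^2) set). act (minv SYm) \<otimes>\<^bsub>Bsl2\<^esub> act TXm = act h' \<otimes>\<^bsub>Bsl2\<^esub> w0"
  apply (rule bexI[where x="RHO2m"])
   apply (rule bexI[where x="wprod [refl ey, refl ex]"])
    apply (simp add: wprod_Cons wprod_Nil one_Bsl2 refl_eqs mdefs mid_def minv_def)
   apply (rule Wplus_mem) apply (simp add: Wgens_def) apply simp
  apply (simp add: Tm_def)
  done

lemma st_Yi_ty: "\<exists>h'\<in>Tm. \<exists>w0\<in>(Wplus :: ('a::field_char_0^2^2 \<Rightarrow> 'a^2^2) set). act (minv SYm) \<otimes>\<^bsub>Bsl2\<^esub> act TYm = act h' \<otimes>\<^bsub>Bsl2\<^esub> w0"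
  apply (rule bexI[where x="mid"])
   apply (rule bexI[where x="wprod [refl ex, refl ey]"])
    apply (simp add: wprod_Cons wprod_Nil one_Bsl2 refl_eqs mdefs mid_def minv_def)
   apply (rule Wplus_mem) apply (simp add: Wgens_def) apply simp
  apply (simp add: Tm_def)
  done

lemma st_Yi_tz: "\<exists>h'\<in>Tm. \<exists>w0\<in>(Wplus :: ('a::field_char_0^2^2 \<Rightarrow> 'a^2^2) set). act (minv SYm) \<otimes>\<^bsub>Bsl2\<^esub> act TZm = act h' \<otimes>\<^bsub>Bsl2\<^esub> w0"
  apply (rule bexI[where x="RHOm"])
   apply (rule bexI[where x="wprod []"])
    apply (simp add: wprod_Cons wprod_Nil one_Bsl2 refl_eqs mdefs mid_def minv_def)
   apply (rule Wplus_mem) apply (simp add: Wgens_def) apply simp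
  apply (simp add: Tm_def)
  done

lemma st_Yi_r: "\<exists>h'\<in>Tm. \<exists>w0\<in>(Wplus :: ('a::field_char_0^2^2 \<Rightarrow> 'a^2^2) set). act (minv SYm) \<otimes>\<^bsub>Bsl2\<^esub> act RHOm = act h' \<otimes>\<^bsub>Bsl2\<^esub> w0"
  apply (rule bexI[where x="TZm"])
   apply (rule bexI[where x="wprod [refl ez, refl ey]"])
    apply (simp add: wprod_Cons wprod_Nil one_Bsl2 refl_eqs mdefs mid_def minv_def)
   apply (rule Wplus_mem) apply (simp add: Wgens_def) apply simp
  apply (simp add: Tm_def)
  done

lemma st_Yi_rr: "\<exists>h'\<in>Tm. \<exists>w0\<in>(Wplus :: ('a::field_char_0^2^2 \<Rightarrow> 'a^2^2) set). act (minv SYm) \<otimes>\<^bsub>Bsl2\<^esub> act RHO2m = act h' \<otimes>\<^bsub>Bsl2\<^esub> w0"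
  apply (rule bexI[where x="TXm"])
   apply (rule bexI[where x="wprod []"])
    apply (simp add: wprod_Cons wprod_Nil one_Bsl2 refl_eqs mdefs mid_def minv_def)
   apply (rule Wplus_mem) apply (simp add: Wgens_def) apply simp
  apply (simp add: Tm_def)
  done

lemma st_Yi: assumes "h \<in> Tm" shows "\<exists>h'\<in>Tm. \<exists>w0\<in>(Wplus :: ('a::field_char_0^2^2 \<Rightarrow> 'a^2^2) set). act (minv SYm) \<otimes>\<^bsub>Bsl2\<^esub> act h = act h' \<otimes>\<^bsub>Bsl2\<^esub> w0"
proof -
  have "h = mid \<or> h = TXm \<or> h = TYm \<or> h = TZm \<or> h = RHOm \<or> h = RHO2m" using assms by (simp add: Tm_def)
  then show ?thesis using st_Yi_1 st_Yi_tx st_Yi_ty st_Yi_tz st_Yi_r st_Yi_rr by (elim disjE) (simp_all only:)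
qed

lemma st_Zi_1: "\<exists>h'\<in>Tm. \<exists>w0\<in>(Wplus :: ('a::field_char_0^2^2 \<Rightarrow> 'a^2^2) set). act (minv SZm) \<otimes>\<^bsub>Bsl2\<^esub> act mid = act h' \<otimes>\<^bsub>Bsl2\<^esub> w0"
  apply (rule bexI[where x="TZm"])
   apply (rule bexI[where x="wprod [refl ez, refl ex]"])
    apply (simp add: wprod_Cons wprod_Nil one_Bsl2 refl_eqs mdefs mid_def minv_def)
   apply (rule Wplus_mem) apply (simp add: Wgens_def) apply simp
  apply (simp add: Tm_def)
  done

lemma st_Zi_tx: "\<exists>h'\<in>Tm. \<exists>w0\<in>(Wplus :: ('a::field_char_0^2^2 \<Rightarrow> 'a^2^2) set). act (minv SZm) \<otimes>\<^bsub>Bsl2\<^esub> act TXm = act h' \<otimes>\<^bsub>Bsl2\<^esub> w0"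
  apply (rule bexI[where x="RHOm"])
   apply (rule bexI[where x="wprod []"])
    apply (simp add: wprod_Cons wprod_Nil one_Bsl2 refl_eqs mdefs mid_def minv_def)
   apply (rule Wplus_mem) apply (simp add: Wgens_def) apply simp
  apply (simp add: Tm_def)
  done

lemma st_Zi_ty: "\<exists>h'\<in>Tm. \<exists>w0\<in>(Wplus :: ('a::field_char_0^2^2 \<Rightarrow> 'a^2^2) set). act (minv SZm) \<otimes>\<^bsub>Bsl2\<^esub> act TYm = act h' \<otimes>\<^bsub>Bsl2\<^esub> w0"
  apply (rule bexI[where x="RHO2m"])
   apply (rule bexI[where x="wprod [refl ez, refl ey]"])
    apply (simp add: wprod_Cons wprod_Nil one_Bsl2 refl_eqs mdefs mid_def minv_def)
   apply (rule Wplus_mem) apply (simp add: Wgens_def) apply simp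
  apply (simp add: Tm_def)
  done

lemma st_Zi_tz: "\<exists>h'\<in>Tm. \<exists>w0\<in>(Wplus :: ('a::field_char_0^2^2 \<Rightarrow> 'a^2^2) set). act (minv SZm) \<otimes>\<^bsub>Bsl2\<^esub> act TZm = act h' \<otimes>\<^bsub>Bsl2\<^esub> w0"
  apply (rule bexI[where x="mid"])
   apply (rule bexI[where x="wprod [refl ey, refl ez]"])
    apply (simp add: wprod_Cons wprod_Nil one_Bsl2 refl_eqs mdefs mid_def minv_def)
   apply (rule Wplus_mem) apply (simp add: Wgens_def) apply simp
  apply (simp add: Tm_def)
  done

lemma st_Zi_r: "\<exists>h'\<in>Tm. \<exists>w0\<in>(Wplus :: ('a::field_char_0^2^2 \<Rightarrow> 'a^2^2) set). act (minv SZm) \<otimes>\<^bsub>Bsl2\<^esub> act RHOm = act h' \<otimes>\<^bsub>Bsl2\<^esub> w0"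
  apply (rule bexI[where x="TXm"])
   apply (rule bexI[where x="wprod [refl ex, refl ez]"])
    apply (simp add: wprod_Cons wprod_Nil one_Bsl2 refl_eqs mdefs mid_def minv_def)
   apply (rule Wplus_mem) apply (simp add: Wgens_def) apply simp
  apply (simp add: Tm_def)
  done

lemma st_Zi_rr: "\<exists>h'\<in>Tm. \<exists>w0\<in>(Wplus :: ('a::field_char_0^2^2 \<Rightarrow> 'a^2^2) set). act (minv SZm) \<otimes>\<^bsub>Bsl2\<^esub> act RHO2m = act h' \<otimes>\<^bsub>Bsl2\<^esub> w0"
  apply (rule bexI[where x="TYm"])
   apply (rule bexI[where x="wprod []"])
    apply (simp add: wprod_Cons wprod_Nil one_Bsl2 refl_eqs mdefs mid_def minv_def)
   apply (rule Wplus_mem) apply (simp add: Wgens_def) apply simp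
  apply (simp add: Tm_def)
  done

lemma st_Zi: assumes "h \<in> Tm" shows "\<exists>h'\<in>Tm. \<exists>w0\<in>(Wplus :: ('a::field_char_0^2^2 \<Rightarrow> 'a^2^2) set). act (minv SZm) \<otimes>\<^bsub>Bsl2\<^esub> act h = act h' \<otimes>\<^bsub>Bsl2\<^esub> w0"
proof -
  have "h = mid \<or> h = TXm \<or> h = TYm \<or> h = TZm \<or> h = RHOm \<or> h = RHO2m" using assms by (simp add: Tm_def)
  then show ?thesis using st_Zi_1 st_Zi_tx st_Zi_ty st_Zi_tz st_Zi_r st_Zi_rr by (elim disjE) (simp_all only:)
qed

definition Uset :: "('a::field_char_0^2^2 \<Rightarrow> 'a^2^2) set" where
  "Uset = {act h \<otimes>\<^bsub>Bsl2\<^esub> w | h w. h \<in> Tm \<and> w \<in> Wplus}"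

lemma U_carrier: "u \<in> (Uset :: ('a::field_char_0^2^2 \<Rightarrow> 'a^2^2) set) \<Longrightarrow> u \<in> carrier Bsl2"
  unfolding Uset_def using Tm_carrier Wplus_carrier monoid.m_closed[OF Bmon] by blast

lemma step:
  assumes S: "(act S :: 'a::field_char_0^2^2 \<Rightarrow> _) \<in> carrier Bsl2"
    and st: "\<And>h. h \<in> Tm \<Longrightarrow> \<exists>h'\<in>Tm. \<exists>w0\<in>(Wplus :: ('a^2^2 \<Rightarrow> 'a^2^2) set). act S \<otimes>\<^bsub>Bsl2\<^esub> act h = act h' \<otimes>\<^bsub>Bsl2\<^esub> w0"
    and u: "u \<in> Uset"
  shows "(act S :: 'a^2^2 \<Rightarrow> _) \<otimes>\<^bsub>Bsl2\<^esub> u \<in> Uset"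
proof -
  obtain h w where hw: "u = act h \<otimes>\<^bsub>Bsl2\<^esub> w" "h \<in> Tm" "w \<in> (Wplus :: ('a^2^2 \<Rightarrow> 'a^2^2) set)"
    using u unfolding Uset_def by blast
  obtain h' w0 where h': "h' \<in> Tm" "w0 \<in> (Wplus :: ('a^2^2 \<Rightarrow> 'a^2^2) set)" "act S \<otimes>\<^bsub>Bsl2\<^esub> act h = act h' \<otimes>\<^bsub>Bsl2\<^esub> w0"
    using st[OF hw(2)] by blast
  have ch: "(act h :: 'a^2^2 \<Rightarrow> _) \<in> carrier Bsl2" using Tm_carrier[OF hw(2)] .
  have ch': "(act h' :: 'a^2^2 \<Rightarrow> _) \<in> carrier Bsl2" using Tm_carrier[OF h'(1)] .
  have cw: "w \<in> carrier Bsl2" using Wplus_carrier[OF hw(3)] .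
  have cw0: "w0 \<in> carrier Bsl2" using Wplus_carrier[OF h'(2)] .
  have "(act S :: 'a^2^2 \<Rightarrow> _) \<otimes>\<^bsub>Bsl2\<^esub> u = (act S \<otimes>\<^bsub>Bsl2\<^esub> act h) \<otimes>\<^bsub>Bsl2\<^esub> w"
    unfolding hw(1) using monoid.m_assoc[OF Bmon S ch cw] by simp
  also have "\<dots> = (act h' \<otimes>\<^bsub>Bsl2\<^esub> w0) \<otimes>\<^bsub>Bsl2\<^esub> w" unfolding h'(3) ..
  also have "\<dots> = act h' \<otimes>\<^bsub>Bsl2\<^esub> (w0 \<otimes>\<^bsub>Bsl2\<^esub> w)" using monoid.m_assoc[OF Bmon ch' cw0 cw] .
  finally show ?thesis unfolding Uset_def using h'(1) Wplus_mult[OF h'(2) hw(3)] by blast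
qed

lemma one_U: "\<one>\<^bsub>Bsl2\<^esub> \<in> (Uset :: ('a::field_char_0^2^2 \<Rightarrow> 'a^2^2) set)"
proof -
  have w: "wprod [] \<in> (Wplus :: ('a^2^2 \<Rightarrow> 'a^2^2) set)" by (rule Wplus_mem) simp_all
  have "(\<one>\<^bsub>Bsl2\<^esub> :: 'a^2^2 \<Rightarrow> _) = act mid \<otimes>\<^bsub>Bsl2\<^esub> wprod []"
    by (simp add: wprod_Nil one_Bsl2 mid_def)
  moreover have "mid \<in> Tm" by (simp add: Tm_def)
  ultimately show ?thesis unfolding Uset_def using w by blast
qed

lemma inv_sig: "inv\<^bsub>Bsl2\<^esub> sigma_x = (act (minv SXm) :: 'a::field_char_0^2^2 \<Rightarrow> _)"
  "inv\<^bsub>Bsl2\<^esub> sigma_y = (act (minv SYm) :: 'a::field_char_0^2^2 \<Rightarrow> _)"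
  "inv\<^bsub>Bsl2\<^esub> sigma_z = (act (minv SZm) :: 'a::field_char_0^2^2 \<Rightarrow> _)"
  by (simp_all add: sig_eqs act_inv det_S)

lemma minv_carrier: "(act (minv SXm) :: 'a::field_char_0^2^2 \<Rightarrow> _) \<in> carrier Bsl2"
  "(act (minv SYm) :: 'a::field_char_0^2^2 \<Rightarrow> _) \<in> carrier Bsl2"
  "(act (minv SZm) :: 'a::field_char_0^2^2 \<Rightarrow> _) \<in> carrier Bsl2"
  by (simp_all add: mdefs minv_def)

lemma S_carrier: "(act SXm :: 'a::field_char_0^2^2 \<Rightarrow> _) \<in> carrier Bsl2"
  "(act SYm :: 'a::field_char_0^2^2 \<Rightarrow> _) \<in> carrier Bsl2"
  "(act SZm :: 'a::field_char_0^2^2 \<Rightarrow> _) \<in> carrier Bsl2"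
  by (simp_all add: mdefs)

lemma cover: assumes "g \<in> carrier (Ggrp :: ('a::field_char_0^2^2 \<Rightarrow> _) monoid)"
  shows "g \<in> carrier Bsl2 \<and> (\<forall>u\<in>Uset. g \<otimes>\<^bsub>Bsl2\<^esub> u \<in> Uset)"
  using assms unfolding Ggrp_carrier
proof (induction rule: generate.induct)
  case one
  show ?case using U_carrier[where 'a='a] monoid.l_one[OF Bmon[where 'a='a]] monoid.one_closed[OF Bmon[where 'a='a]] by simp
next
  case (incl h)
  then have "h = act SXm \<or> h = act SYm \<or> h = act SZm" by (simp add: sig_eqs)
  then show ?case
    using step[OF S_carrier(1) st_X, where 'a='a] step[OF S_carrier(2) st_Y, where 'a='a] step[OF S_carrier(3) st_Z, where 'a='a] S_carrier[where 'a='a]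
    by (elim disjE) simp_all
next
  case (inv h)
  then have "inv\<^bsub>Bsl2\<^esub> h = act (minv SXm) \<or> inv\<^bsub>Bsl2\<^esub> h = act (minv SYm) \<or> inv\<^bsub>Bsl2\<^esub> h = act (minv SZm)"
    using inv_sig[where 'a='a] by auto
  then show ?case
    using step[OF minv_carrier(1) st_Xi, where 'a='a] step[OF minv_carrier(2) st_Yi, where 'a='a] step[OF minv_carrier(3) st_Zi, where 'a='a] minv_carrier[where 'a='a]
    by (elim disjE) simp_all
next
  case (eng g1 g2)
  have c: "g1 \<in> carrier Bsl2" "g2 \<in> carrier Bsl2" using eng.IH by auto
  show ?case
  proof
    show "g1 \<otimes>\<^bsub>Bsl2\<^esub> g2 \<in> carrier Bsl2" using monoid.m_closed[OF Bmon c] .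
  next
    show "\<forall>u\<in>Uset. g1 \<otimes>\<^bsub>Bsl2\<^esub> g2 \<otimes>\<^bsub>Bsl2\<^esub> u \<in> Uset"
    proof
      fix u assume u: "u \<in> (Uset :: ('a^2^2 \<Rightarrow> 'a^2^2) set)"
      have "g1 \<otimes>\<^bsub>Bsl2\<^esub> g2 \<otimes>\<^bsub>Bsl2\<^esub> u = g1 \<otimes>\<^bsub>Bsl2\<^esub> (g2 \<otimes>\<^bsub>Bsl2\<^esub> u)"
        using monoid.m_assoc[OF Bmon c U_carrier[OF u]] .
      then show "g1 \<otimes>\<^bsub>Bsl2\<^esub> g2 \<otimes>\<^bsub>Bsl2\<^esub> u \<in> Uset" using eng.IH u by simp
    qed
  qed
qed

lemma G_U: assumes "g \<in> carrier (Ggrp :: ('a::field_char_0^2^2 \<Rightarrow> _) monoid)"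
  shows "g \<in> Uset"
proof -
  have "g \<in> carrier Bsl2" "g \<otimes>\<^bsub>Bsl2\<^esub> \<one>\<^bsub>Bsl2\<^esub> \<in> Uset" using cover[OF assms] one_U by auto
  then show ?thesis using monoid.r_one[OF Bmon[where 'a='a]] by simp
qed


lemma G_gen: "sigma_x \<in> carrier (Ggrp :: ('a::field_char_0^2^2 \<Rightarrow> _) monoid)"
  "sigma_y \<in> carrier (Ggrp :: ('a::field_char_0^2^2 \<Rightarrow> _) monoid)"
  "sigma_z \<in> carrier (Ggrp :: ('a::field_char_0^2^2 \<Rightarrow> _) monoid)"
  "inv\<^bsub>Bsl2\<^esub> sigma_x \<in> carrier (Ggrp :: ('a::field_char_0^2^2 \<Rightarrow> _) monoid)"
  "inv\<^bsub>Bsl2\<^esub> sigma_y \<in> carrier (Ggrp :: ('a::field_char_0^2^2 \<Rightarrow> _) monoid)"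
  "inv\<^bsub>Bsl2\<^esub> sigma_z \<in> carrier (Ggrp :: ('a::field_char_0^2^2 \<Rightarrow> _) monoid)"
  "\<one>\<^bsub>Bsl2\<^esub> \<in> carrier (Ggrp :: ('a::field_char_0^2^2 \<Rightarrow> _) monoid)"
  unfolding Ggrp_carrier by (auto intro: generate.incl generate.inv generate.one)

lemma G_mult: "x \<in> carrier (Ggrp :: ('a::field_char_0^2^2 \<Rightarrow> _) monoid) \<Longrightarrow> y \<in> carrier Ggrp
  \<Longrightarrow> x \<otimes>\<^bsub>Bsl2\<^esub> y \<in> carrier Ggrp"
  unfolding Ggrp_carrier by (rule generate.eng)

lemma G_carrier_B: "x \<in> carrier (Ggrp :: ('a::field_char_0^2^2 \<Rightarrow> _) monoid) \<Longrightarrow> x \<in> carrier Bsl2"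
  using cover by blast

lemma pair_G: assumes "a \<in> (Wgens :: ('a::field_char_0^2^2 \<Rightarrow> 'a^2^2) set)" "b \<in> Wgens"
  shows "a \<otimes>\<^bsub>Bsl2\<^esub> b \<in> carrier (Ggrp :: ('a^2^2 \<Rightarrow> _) monoid)"
proof -
  have zz: "(sigma_z \<otimes>\<^bsub>Bsl2\<^esub> sigma_z :: 'a^2^2 \<Rightarrow> _) \<in> carrier Ggrp" by (intro G_mult G_gen)
  have yy: "(sigma_y \<otimes>\<^bsub>Bsl2\<^esub> sigma_y :: 'a^2^2 \<Rightarrow> _) \<in> carrier Ggrp" by (intro G_mult G_gen)
  have xx: "(sigma_x \<otimes>\<^bsub>Bsl2\<^esub> sigma_x :: 'a^2^2 \<Rightarrow> _) \<in> carrier Ggrp" by (intro G_mult G_gen)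
  have zzi: "(inv\<^bsub>Bsl2\<^esub> sigma_z \<otimes>\<^bsub>Bsl2\<^esub> inv\<^bsub>Bsl2\<^esub> sigma_z :: 'a^2^2 \<Rightarrow> _) \<in> carrier Ggrp" by (intro G_mult G_gen)
  have yyi: "(inv\<^bsub>Bsl2\<^esub> sigma_y \<otimes>\<^bsub>Bsl2\<^esub> inv\<^bsub>Bsl2\<^esub> sigma_y :: 'a^2^2 \<Rightarrow> _) \<in> carrier Ggrp" by (intro G_mult G_gen)
  have xxi: "(inv\<^bsub>Bsl2\<^esub> sigma_x \<otimes>\<^bsub>Bsl2\<^esub> inv\<^bsub>Bsl2\<^esub> sigma_x :: 'a^2^2 \<Rightarrow> _) \<in> carrier Ggrp" by (intro G_mult G_gen)
  have one: "(\<one>\<^bsub>Bsl2\<^esub> :: 'a^2^2 \<Rightarrow> _) \<in> carrier Ggrp" by (rule G_gen)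
  have r1: "(act RXm \<otimes>\<^bsub>Bsl2\<^esub> act RYm :: 'a^2^2 \<Rightarrow> _) = sigma_z \<otimes>\<^bsub>Bsl2\<^esub> sigma_z" by (simp add: sig_eqs mdefs)
  have r2: "(act RXm \<otimes>\<^bsub>Bsl2\<^esub> act RZm :: 'a^2^2 \<Rightarrow> _) = inv\<^bsub>Bsl2\<^esub> sigma_y \<otimes>\<^bsub>Bsl2\<^esub> inv\<^bsub>Bsl2\<^esub> sigma_y"
    by (simp add: inv_sig mdefs minv_def)
  have r3: "(act RYm \<otimes>\<^bsub>Bsl2\<^esub> act RXm :: 'a^2^2 \<Rightarrow> _) = inv\<^bsub>Bsl2\<^esub> sigma_z \<otimes>\<^bsub>Bsl2\<^esub> inv\<^bsub>Bsl2\<^esub> sigma_z"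
    by (simp add: inv_sig mdefs minv_def)
  have r4: "(act RYm \<otimes>\<^bsub>Bsl2\<^esub> act RZm :: 'a^2^2 \<Rightarrow> _) = sigma_x \<otimes>\<^bsub>Bsl2\<^esub> sigma_x" by (simp add: sig_eqs mdefs)
  have r5: "(act RZm \<otimes>\<^bsub>Bsl2\<^esub> act RXm :: 'a^2^2 \<Rightarrow> _) = sigma_y \<otimes>\<^bsub>Bsl2\<^esub> sigma_y" by (simp add: sig_eqs mdefs)
  have r6: "(act RZm \<otimes>\<^bsub>Bsl2\<^esub> act RYm :: 'a^2^2 \<Rightarrow> _) = inv\<^bsub>Bsl2\<^esub> sigma_x \<otimes>\<^bsub>Bsl2\<^esub> inv\<^bsub>Bsl2\<^esub> sigma_x"
    by (simp add: inv_sig mdefs minv_def)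
  have r7: "(act RXm \<otimes>\<^bsub>Bsl2\<^esub> act RXm :: 'a^2^2 \<Rightarrow> _) = \<one>\<^bsub>Bsl2\<^esub>" by (simp add: one_Bsl2 mdefs mid_def)
  have r8: "(act RYm \<otimes>\<^bsub>Bsl2\<^esub> act RYm :: 'a^2^2 \<Rightarrow> _) = \<one>\<^bsub>Bsl2\<^esub>" by (simp add: one_Bsl2 mdefs mid_def)
  have r9: "(act RZm \<otimes>\<^bsub>Bsl2\<^esub> act RZm :: 'a^2^2 \<Rightarrow> _) = \<one>\<^bsub>Bsl2\<^esub>" by (simp add: one_Bsl2 mdefs mid_def)
  have "a = act RXm \<or> a = act RYm \<or> a = act RZm" "b = act RXm \<or> b = act RYm \<or> b = act RZm"
    using assms Wgens_eq[where 'a='a] by auto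
  then show ?thesis
    using zz yy xx zzi yyi xxi one r1 r2 r3 r4 r5 r6 r7 r8 r9 by (elim disjE) simp_all
qed

lemma wprod_G: "set (ws :: ('a::field_char_0^2^2 \<Rightarrow> 'a^2^2) list) \<subseteq> Wgens \<Longrightarrow> even (length ws) \<Longrightarrow> wprod ws \<in> carrier Ggrp"
proof (induction ws rule: induct_list012)
  case 1 then show ?case using G_gen(7) by (simp add: wprod_Nil)
next
  case (2 x) then show ?case by simp
next
  case (3 x y zs)
  have xy: "x \<in> Wgens" "y \<in> Wgens" "set zs \<subseteq> Wgens" using "3.prems" by auto
  have cx: "x \<in> carrier Bsl2" "y \<in> carrier Bsl2" using xy Wgens_carrier[where 'a='a] by auto
  have cz: "wprod zs \<in> carrier Bsl2" using wprod_carrier[OF xy(3)] .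
  have "wprod (x # y # zs) = (x \<otimes>\<^bsub>Bsl2\<^esub> y) \<otimes>\<^bsub>Bsl2\<^esub> wprod zs"
    using monoid.m_assoc[OF Bmon cx cz] by (simp add: wprod_Cons)
  moreover have "wprod zs \<in> carrier Ggrp" using "3.IH"(1) xy(3) "3.prems"(2) by simp
  ultimately show ?case using G_mult pair_G[OF xy(1,2)] by simp
qed

lemma Wplus_G: "w \<in> (Wplus :: ('a::field_char_0^2^2 \<Rightarrow> 'a^2^2) set) \<Longrightarrow> w \<in> carrier Ggrp"
proof -
  assume "w \<in> Wplus"
  then obtain ws where "w = wprod ws" "set ws \<subseteq> Wgens" "even (length ws)" unfolding Wplus_eq by auto
  then show ?thesis using wprod_G by blast
qed

lemma phi_W: "w \<in> (Wplus :: ('a::field_char_0^2^2 \<Rightarrow> 'a^2^2) set) \<Longrightarrow> phi w = id"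
proof -
  assume "w \<in> Wplus"
  then obtain M where M: "w = act M" "md2 M = mid" using Wplus_mat by blast
  have "md2 M = pm id" using M(2) pm_id by simp
  then show ?thesis unfolding M(1) by (rule phi_act[OF permutes_id])
qed

lemma kernel_eq: "kernel (Ggrp :: ('a::field_char_0^2^2 \<Rightarrow> _) monoid) (sym_group 3) phi = Wplus"
proof (rule equalityI; rule subsetI)
  fix w :: "'a^2^2 \<Rightarrow> 'a^2^2"
  assume "w \<in> Wplus"
  then show "w \<in> kernel Ggrp (sym_group 3) phi"
    unfolding kernel_def using Wplus_G[where 'a='a] phi_W[where 'a='a] by (simp add: sym_group_one)
next
  fix g :: "'a^2^2 \<Rightarrow> 'a^2^2"
  assume "g \<in> kernel Ggrp (sym_group 3) phi"
  then have gG: "g \<in> carrier Ggrp" and pg: "phi g = id" unfolding kernel_def by (auto simp: sym_group_one)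
  obtain h w where hw: "g = act h \<otimes>\<^bsub>Bsl2\<^esub> w" "h \<in> Tm" "w \<in> (Wplus :: ('a^2^2 \<Rightarrow> 'a^2^2) set)"
    using G_U[OF gG] unfolding Uset_def by blast
  obtain M where M: "w = act M" "md2 M = mid" using Wplus_mat[OF hw(3)] by blast
  have ch: "(act h :: 'a^2^2 \<Rightarrow> _) \<in> carrier Bsl2" using Tm_carrier[OF hw(2)] .
  have cM: "(act M :: 'a^2^2 \<Rightarrow> _) \<in> carrier Bsl2" using Wplus_carrier[OF hw(3)] unfolding M(1) .
  have g2: "g = act (mmul h M)" unfolding hw(1) M(1) by (rule act_mult_c[OF ch cM])
  obtain A p where A: "g = act A" "p permutes {1..3}" "md2 A = pm p" using G_inv[OF gG] by blast
  have "phi g = p" unfolding A(1) by (rule phi_act[OF A(2,3)])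
  then have "p = id" using pg by simp
  have "A = mmul h M" using act_inj A(1) g2 by metis
  then have "md2 (mmul h M) = mid" using A(3) \<open>p = id\<close> pm_id by simp
  moreover have "md2 (mmul h M) = md2 h"
    by (subst md2_mmul) (simp only: M(2) mmul_mid md2_md2)
  ultimately have "md2 h = mid" by simp
  then have "h = mid" using hw(2) md2_T unfolding Tm_def by auto
  then have "g = w" using hw(1) monoid.l_one[OF Bmon Wplus_carrier[OF hw(3)]] by (simp add: one_Bsl2)
  then show "g \<in> Wplus" using hw(3) by simp
qed

lemma perm3_cases: assumes p: "p permutes {1..3::nat}"
  shows "p = id \<or> p = Transposition.transpose 2 3 \<or> p = Transposition.transpose 1 3 \<or> p = Transposition.transpose 1 2
    \<or> p = Transposition.transpose 2 3 \<circ> Transposition.transpose 1 3 \<or> p = Transposition.transpose 1 3 \<circ> Transposition.transpose 2 3"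
proof -
  have v: "p 1 = 1 \<or> p 1 = 2 \<or> p 1 = 3" "p 2 = 1 \<or> p 2 = 2 \<or> p 2 = 3" "p 3 = 1 \<or> p 3 = 2 \<or> p 3 = 3"
    using perm_vals[OF p] by auto
  have d: "p 1 \<noteq> p 2" "p 1 \<noteq> p 3" "p 2 \<noteq> p 3"
    by (simp_all add: inj_eq[OF permutes_inj[OF p]])
  have c1: "p = id" if "p 1 = 1" "p 2 = 2" "p 3 = 3"
    apply (rule perm_ext[OF p permutes_id])
    using that by simp_all
  have c2: "p = Transposition.transpose 2 3" if "p 1 = 1" "p 2 = 3" "p 3 = 2"
    apply (rule perm_ext[OF p t_perm(1)])
    using that by (simp_all add: Transposition.transpose_def)
  have c3: "p = Transposition.transpose 1 3" if "p 1 = 3" "p 2 = 2" "p 3 = 1"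
    apply (rule perm_ext[OF p t_perm(2)])
    using that by (simp_all add: Transposition.transpose_def)
  have c4: "p = Transposition.transpose 1 2" if "p 1 = 2" "p 2 = 1" "p 3 = 3"
    apply (rule perm_ext[OF p t_perm(3)])
    using that by (simp_all add: Transposition.transpose_def)
  have c5: "p = Transposition.transpose 2 3 \<circ> Transposition.transpose 1 3" if "p 1 = 2" "p 2 = 3" "p 3 = 1"
    apply (rule perm_ext[OF p permutes_compose[OF t_perm(2) t_perm(1)]])
    using that by (simp_all add: Transposition.transpose_def)
  have c6: "p = Transposition.transpose 1 3 \<circ> Transposition.transpose 2 3" if "p 1 = 3" "p 2 = 1" "p 3 = 2"
    apply (rule perm_ext[OF p permutes_compose[OF t_perm(1) t_perm(2)]])
    using that by (simp_all add: Transposition.transpose_def)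
  have "(p 1 = 1 \<and> p 2 = 2 \<and> p 3 = 3) \<or> (p 1 = 1 \<and> p 2 = 3 \<and> p 3 = 2) \<or> (p 1 = 3 \<and> p 2 = 2 \<and> p 3 = 1)
    \<or> (p 1 = 2 \<and> p 2 = 1 \<and> p 3 = 3) \<or> (p 1 = 2 \<and> p 2 = 3 \<and> p 3 = 1) \<or> (p 1 = 3 \<and> p 2 = 1 \<and> p 3 = 2)"
    using v d by (elim disjE) simp_all
  then show ?thesis using c1 c2 c3 c4 c5 c6 by blast
qed

lemma phi_sig: "phi (sigma_x :: 'a::field_char_0^2^2 \<Rightarrow> _) = Transposition.transpose 2 3"
  "phi (sigma_y :: 'a::field_char_0^2^2 \<Rightarrow> _) = Transposition.transpose 1 3"
  "phi (sigma_z :: 'a::field_char_0^2^2 \<Rightarrow> _) = Transposition.transpose 1 2"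
  "phi (\<one>\<^bsub>Bsl2\<^esub> :: 'a::field_char_0^2^2 \<Rightarrow> _) = id"
  unfolding sig_eqs one_Bsl2
  by (rule phi_act[OF t_perm(1) md2_S(1)] phi_act[OF t_perm(2) md2_S(2)] phi_act[OF t_perm(3) md2_S(3)]
      phi_act[OF permutes_id])+ (simp add: mid_def pm_def par_def)

lemma phi_surj: "phi ` carrier (Ggrp :: ('a::field_char_0^2^2 \<Rightarrow> _) monoid) = carrier (sym_group 3)"
proof (rule equalityI)
  show "phi ` carrier (Ggrp :: ('a::field_char_0^2^2 \<Rightarrow> _) monoid) \<subseteq> carrier (sym_group 3)"
    using phi_hom[where 'a='a] by (auto simp: hom_def)
next
  show "carrier (sym_group 3) \<subseteq> phi ` carrier (Ggrp :: ('a::field_char_0^2^2 \<Rightarrow> _) monoid)"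
  proof
    fix p assume "p \<in> carrier (sym_group 3)"
    then have p: "p permutes {1..3}" by (simp add: sym_group_carrier)
    have m: "phi (x \<otimes>\<^bsub>Bsl2\<^esub> y) = phi x \<circ> phi y" if "x \<in> carrier (Ggrp :: ('a^2^2 \<Rightarrow> _) monoid)" "y \<in> carrier Ggrp" for x y
      using phi_hom[where 'a='a] that by (simp add: hom_def Ggrp_mult sym_group_mult)
    have i1: "id \<in> phi ` carrier (Ggrp :: ('a^2^2 \<Rightarrow> _) monoid)" using G_gen(7) phi_sig(4) by (metis image_eqI)
    have i2: "Transposition.transpose 2 3 \<in> phi ` carrier (Ggrp :: ('a^2^2 \<Rightarrow> _) monoid)" using G_gen(1) phi_sig(1) by (metis image_eqI)
    have i3: "Transposition.transpose 1 3 \<in> phi ` carrier (Ggrp :: ('a^2^2 \<Rightarrow> _) monoid)" using G_gen(2) phi_sig(2) by (metis image_eqI)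
    have i4: "Transposition.transpose 1 2 \<in> phi ` carrier (Ggrp :: ('a^2^2 \<Rightarrow> _) monoid)" using G_gen(3) phi_sig(3) by (metis image_eqI)
    have i5: "Transposition.transpose 2 3 \<circ> Transposition.transpose 1 3 \<in> phi ` carrier (Ggrp :: ('a^2^2 \<Rightarrow> _) monoid)"
      using G_mult[OF G_gen(1) G_gen(2)] m[OF G_gen(1) G_gen(2)] phi_sig(1,2) by (metis image_eqI)
    have i6: "Transposition.transpose 1 3 \<circ> Transposition.transpose 2 3 \<in> phi ` carrier (Ggrp :: ('a^2^2 \<Rightarrow> _) monoid)"
      using G_mult[OF G_gen(2) G_gen(1)] m[OF G_gen(2) G_gen(1)] phi_sig(1,2) by (metis image_eqI)
    show "p \<in> phi ` carrier (Ggrp :: ('a^2^2 \<Rightarrow> _) monoid)"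
      using perm3_cases[OF p] i1 i2 i3 i4 i5 i6 by (elim disjE) simp_all
  qed
qed

lemma group_hom_phi: "group_hom (Ggrp :: ('a::field_char_0^2^2 \<Rightarrow> _) monoid) (sym_group 3) phi"
  unfolding group_hom_def group_hom_axioms_def
  using group_Ggrp sym_group_is_group phi_hom by blast

lemma T_G: "(act TXm :: 'a::field_char_0^2^2 \<Rightarrow> _) \<in> carrier Ggrp"
  "(act TYm :: 'a::field_char_0^2^2 \<Rightarrow> _) \<in> carrier Ggrp"
  "(act TZm :: 'a::field_char_0^2^2 \<Rightarrow> _) \<in> carrier Ggrp"
  "(act RHOm :: 'a::field_char_0^2^2 \<Rightarrow> _) \<in> carrier Ggrp"
  "(act RHO2m :: 'a::field_char_0^2^2 \<Rightarrow> _) \<in> carrier Ggrp"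
  "(act mid :: 'a::field_char_0^2^2 \<Rightarrow> _) \<in> carrier Ggrp"
proof -
  have "(act TXm :: 'a^2^2 \<Rightarrow> _) = sigma_y \<otimes>\<^bsub>Bsl2\<^esub> sigma_z \<otimes>\<^bsub>Bsl2\<^esub> sigma_y" by (simp add: sig_eqs mdefs)
  then show "(act TXm :: 'a::field_char_0^2^2 \<Rightarrow> _) \<in> carrier Ggrp" by (simp add: G_mult G_gen)
  have "(act TYm :: 'a^2^2 \<Rightarrow> _) = sigma_z \<otimes>\<^bsub>Bsl2\<^esub> sigma_x \<otimes>\<^bsub>Bsl2\<^esub> sigma_z" by (simp add: sig_eqs mdefs)
  then show "(act TYm :: 'a::field_char_0^2^2 \<Rightarrow> _) \<in> carrier Ggrp" by (simp add: G_mult G_gen)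
  have "(act TZm :: 'a^2^2 \<Rightarrow> _) = sigma_x \<otimes>\<^bsub>Bsl2\<^esub> sigma_y \<otimes>\<^bsub>Bsl2\<^esub> sigma_x" by (simp add: sig_eqs mdefs)
  then show "(act TZm :: 'a::field_char_0^2^2 \<Rightarrow> _) \<in> carrier Ggrp" by (simp add: G_mult G_gen)
  have "(act RHOm :: 'a^2^2 \<Rightarrow> _) = sigma_x \<otimes>\<^bsub>Bsl2\<^esub> sigma_y" by (simp add: sig_eqs mdefs)
  then show "(act RHOm :: 'a::field_char_0^2^2 \<Rightarrow> _) \<in> carrier Ggrp" by (simp add: G_mult G_gen)
  have "(act RHO2m :: 'a^2^2 \<Rightarrow> _) = sigma_x \<otimes>\<^bsub>Bsl2\<^esub> sigma_y \<otimes>\<^bsub>Bsl2\<^esub> (sigma_x \<otimes>\<^bsub>Bsl2\<^esub> sigma_y)" by (simp add: sig_eqs mdefs)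
  then show "(act RHO2m :: 'a::field_char_0^2^2 \<Rightarrow> _) \<in> carrier Ggrp" by (simp add: G_mult G_gen)
  show "(act mid :: 'a::field_char_0^2^2 \<Rightarrow> _) \<in> carrier Ggrp" using G_gen(7) by (simp add: one_Bsl2)
qed


lemma final_iso: "Ggrp Mod (Wplus :: ('a::field_char_0^2^2 \<Rightarrow> 'a^2^2) set) \<cong> sym_group 3"
  using group_hom.FactGroup_iso[OF group_hom_phi[where 'a='a] phi_surj[where 'a='a]] kernel_eq[where 'a='a] by simp

theorem proposition7p6:
  shows "(Wplus :: ('a::field_char_0^2^2 \<Rightarrow> 'a^2^2) set) \<lhd> Ggrp
    \<and> {g <#\<^bsub>Ggrp\<^esub> (Wplus :: ('a^2^2 \<Rightarrow> 'a^2^2) set) | g. g \<in> carrier Ggrp}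
        = {Wplus, tau_x <#\<^bsub>Ggrp\<^esub> Wplus, tau_y <#\<^bsub>Ggrp\<^esub> Wplus, tau_z <#\<^bsub>Ggrp\<^esub> Wplus,
           rho <#\<^bsub>Ggrp\<^esub> Wplus, (rho \<otimes>\<^bsub>Ggrp\<^esub> rho) <#\<^bsub>Ggrp\<^esub> Wplus}
    \<and> Ggrp Mod Wplus \<cong> sym_group 3"
proof -
  have gh: "group_hom (Ggrp :: ('a^2^2 \<Rightarrow> _) monoid) (sym_group 3) phi" by (rule group_hom_phi)
  have grp: "group (Ggrp :: ('a^2^2 \<Rightarrow> _) monoid)" by (rule group_Ggrp)
  have N: "(Wplus :: ('a^2^2 \<Rightarrow> 'a^2^2) set) \<lhd> Ggrp"
    using group_hom.normal_kernel[OF gh] kernel_eq[where 'a='a] by simp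
  have iso: "Ggrp Mod (Wplus :: ('a^2^2 \<Rightarrow> 'a^2^2) set) \<cong> sym_group 3"
    using group_hom.FactGroup_iso[OF gh phi_surj] kernel_eq[where 'a='a] by simp
  have sub: "subgroup (Wplus :: ('a^2^2 \<Rightarrow> 'a^2^2) set) Ggrp" using normal_imp_subgroup[OF N] .
  have W1: "(act mid :: 'a^2^2 \<Rightarrow> _) <#\<^bsub>Ggrp\<^esub> Wplus = Wplus"
    using group.lcos_mult_one[OF grp subgroup.subset[OF sub]] by (simp add: Ggrp_one one_Bsl2)
  have TG: "h \<in> Tm \<Longrightarrow> (act h :: 'a^2^2 \<Rightarrow> _) \<in> carrier Ggrp" for h
    using T_G[where 'a='a] unfolding Tm_def by auto
  have L: "{Wplus, tau_x <#\<^bsub>Ggrp\<^esub> Wplus, tau_y <#\<^bsub>Ggrp\<^esub> Wplus, tau_z <#\<^bsub>Ggrp\<^esub> Wplus,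
           rho <#\<^bsub>Ggrp\<^esub> Wplus, (rho \<otimes>\<^bsub>Ggrp\<^esub> rho) <#\<^bsub>Ggrp\<^esub> (Wplus :: ('a^2^2 \<Rightarrow> 'a^2^2) set)}
        = (\<lambda>h. act h <#\<^bsub>Ggrp\<^esub> Wplus) ` Tm"
    unfolding Tm_def tau_eqs rho_eq' rho2_eq[unfolded rho_eq'] using W1 by auto
  have C: "{g <#\<^bsub>Ggrp\<^esub> (Wplus :: ('a^2^2 \<Rightarrow> 'a^2^2) set) | g. g \<in> carrier Ggrp}
        = (\<lambda>h. act h <#\<^bsub>Ggrp\<^esub> Wplus) ` Tm"
  proof (rule equalityI; rule subsetI)
    fix X assume "X \<in> {g <#\<^bsub>Ggrp\<^esub> (Wplus :: ('a^2^2 \<Rightarrow> 'a^2^2) set) | g. g \<in> carrier Ggrp}"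
    then obtain g where g: "X = g <#\<^bsub>Ggrp\<^esub> Wplus" "g \<in> carrier (Ggrp :: ('a^2^2 \<Rightarrow> _) monoid)" by blast
    obtain h w where hw: "g = act h \<otimes>\<^bsub>Bsl2\<^esub> w" "h \<in> Tm" "w \<in> (Wplus :: ('a^2^2 \<Rightarrow> 'a^2^2) set)"
      using G_U[OF g(2)] unfolding Uset_def by blast
    have "g \<in> (act h :: 'a^2^2 \<Rightarrow> _) <#\<^bsub>Ggrp\<^esub> Wplus"
      unfolding l_coset_def Ggrp_mult hw(1) using hw(3) by blast
    then have "(act h :: 'a^2^2 \<Rightarrow> _) <#\<^bsub>Ggrp\<^esub> Wplus = g <#\<^bsub>Ggrp\<^esub> Wplus"
      by (rule group.l_repr_independence[OF grp _ TG[OF hw(2)] sub])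
    then show "X \<in> (\<lambda>h. act h <#\<^bsub>Ggrp\<^esub> Wplus) ` Tm" using g(1) hw(2) by auto
  next
    fix X assume "X \<in> (\<lambda>h. (act h :: 'a^2^2 \<Rightarrow> _) <#\<^bsub>Ggrp\<^esub> Wplus) ` Tm"
    then obtain h where "X = act h <#\<^bsub>Ggrp\<^esub> Wplus" "h \<in> Tm" by blast
    then show "X \<in> {g <#\<^bsub>Ggrp\<^esub> (Wplus :: ('a^2^2 \<Rightarrow> 'a^2^2) set) | g. g \<in> carrier Ggrp}"
      using TG by blast
  qed
  show ?thesis using N final_iso C L by simp
qed

end
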